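(* In $\mathrm{F}_H$, if $\emptyset \vdash v : T$ for a value $v$, then $v \in [\![T]\!]$, i.e., for every $w \in \mathit{refines}(T)$ we have $w\,v \longrightarrow^* \mathsf{true}$.
   Context: Syntax of $\mathrm{F}_H$. Base types $B$ include $\mathsf{Bool}$; each $B$ has a set $\mathcal{K}_B$ of constants ($\mathcal{K}_{\mathsf{Bool}}=\{\mathsf{true},\mathsf{false}\}$). Primitive operations $\mathtt{op}$ have denotations $[\![\mathtt{op}]\!]$ (partial functions from tuples of constants to constants). Types $T ::= B \mid \alpha \mid x{:}T_1\to T_2 \mid \forall\alpha.T \mid \{x{:}T \mid e\}$; $T_1\to T_2$ abbreviates $x{:}T_1\to T_2$ with $x$ not free in $T_2$. Values $v ::= k \mid \lambda x{:}T.e \mid \Lambda\alpha.e \mid \langle T_1\Rightarrow T_2\rangle^{\ell}$. Terms $e ::= v \mid x \mid \mathtt{op}(e_1,\dots,e_n) \mid e_1\,e_2 \mid e\,T \mid \langle\!\langle \{x{:}T_1\mid e_1\}, e_2\rangle\!\rangle^{\ell} \mid \langle \{x{:}T_1\mid e_1\}, e_2, v\rangle^{\ell} \mid \Uparrow\ell$. Substitution is capture-avoiding; $\mathsf{let}\ y{:}T=e_1\ \mathsf{in}\ e_2$ means $(\lambda y{:}T.e_2)\,e_1$. Semantics. Reduction $\rightsquigarrow$: $\mathtt{op}(k_1,\dots,k_n)\rightsquigarrow[\![\mathtt{op}]\!](k_1,\dots,k_n)$; $(\lambda x{:}T.e)\,v\rightsquigarrow e[v/x]$; $(\Lambda\alpha.e)\,T\rightsquigarrow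 e[T/\alpha]$; $\langle B\Rightarrow B\rangle^\ell v\rightsquigarrow v$; $\langle x{:}T_{11}\to T_{12}\Rightarrow x{:}T_{21}\to T_{22}\rangle^\ell v\rightsquigarrow \lambda x{:}T_{21}.\,\mathsf{let}\ y{:}T_{11}=\langle T_{21}\Rightarrow T_{11}\rangle^\ell x\ \mathsf{in}\ \langle T_{12}[y/x]\Rightarrow T_{22}\rangle^\ell (v\,y)$ ($y$ fresh); $\langle\forall\alpha.T_1\Rightarrow\forall\alpha.T_2\rangle^\ell v\rightsquigarrow\Lambda\alpha.\langle T_1\Rightarrow T_2\rangle^\ell(v\,\alpha)$; $\langle\{x{:}T_1\mid e_1\}\Rightarrow T_2\rangle^\ell v\rightsquigarrow\langle T_1\Rightarrow T_2\rangle^\ell v$; $\langle T_1\Rightarrow\{x{:}T_2\mid e_2\}\rangle^\ell v\rightsquigarrow\langle\!\langle\{x{:}T_2\mid e_2\},\langle T_1\Rightarrow T_2\rangle^\ell v\rangle\!\rangle^\ell$ if $T_1$ is not a refinement type; $\langle\!\langle\{x{:}T\mid e\},v\rangle\!\rangle^\ell\rightsquigarrow\langle\{x{:}T\mid e\},e[v/x],v\rangle^\ell$; $\langle\{x{:}T\mid e\},\mathsf{true},v\rangle^\ell\rightsquigarrow v$; $\langle\{x{:}T\mid e\},\mathsf{false},v\rangle^\ell\rightsquigarrow\Uparrow\ell$. Evaluation contexts $E ::= [\,] \mid \mathtt{op}(v_1,\dots,v_n,E,e_1,\dots,e_m) \mid E\,e \mid v\,E \mid E\,T \mid \langle\!\langle\{x{:}T\mid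 e\},E\rangle\!\rangle^\ell \mid \langle\{x{:}T\mid e\},E,v\rangle^\ell$; $E[e_1]\longrightarrow E[e_2]$ if $e_1\rightsquigarrow e_2$, and $E[\Uparrow\ell]\longrightarrow\Uparrow\ell$ if $E\ne[\,]$; $\longrightarrow^*$ is its reflexive–transitive closure. Typing. Contexts $\Gamma ::= \emptyset \mid \Gamma,x{:}T \mid \Gamma,\alpha$ (distinct variables). Each constant has a type $\mathsf{ty}(k)$ and each operation a type $\mathsf{ty}(\mathtt{op})=x_1{:}T_1\to\dots\to x_n{:}T_n\to T_0$. Let $\mathit{unref}(\{x{:}T\mid e\})=\mathit{unref}(T)$ and $\mathit{unref}(T)=T$ otherwise. Assumed: for $k\in\mathcal{K}_B$, $\mathit{unref}(\mathsf{ty}(k))=B$, $\emptyset\vdash\mathsf{ty}(k)$ and $\langle B\Rightarrow\mathsf{ty}(k)\rangle^\ell k\longrightarrow^* k$; each $\mathit{unref}(T_i)$ ($0\le i\le n$) for $\mathsf{ty}(\mathtt{op})$ is a base type, and if $k_i\in\mathcal{K}_{\mathit{unref}(T_i)}$ with $\langle \mathit{unref}(T_i)\Rightarrow T_i[k_1/x_1,\dots,k_{i-1}/x_{i-1}]\rangle^\ell k_i\longrightarrow^* k_i$ for all $1\le i\le n$, then $[\![\mathtt{op}]\!](k_1,\dots,k_n)=k\in\mathcal{K}_{\mathit{unref}(T_0)}$ with $\langle\mathit{unref}(T_0)\Rightarrow T_0[k_1/x_1,\dots,k_n/x_n]\rangle^\ell k\longrightarrow^* k$, while $[\![\mathtt{op}]\!](k_1,\dots,k_n)$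 is undefined if some $k_i$ fails this condition. Well-formedness: $\vdash\emptyset$; $\vdash\Gamma,x{:}T$ if $\vdash\Gamma$, $\Gamma\vdash T$; $\vdash\Gamma,\alpha$ if $\vdash\Gamma$. $\Gamma\vdash B$ if $\vdash\Gamma$; $\Gamma\vdash\alpha$ if $\vdash\Gamma$, $\alpha\in\Gamma$; $\Gamma\vdash x{:}T_1\to T_2$ if $\Gamma\vdash T_1$ and $\Gamma,x{:}T_1\vdash T_2$; $\Gamma\vdash\forall\alpha.T$ if $\Gamma,\alpha\vdash T$; $\Gamma\vdash\{x{:}T\mid e\}$ if $\Gamma\vdash T$ and $\Gamma,x{:}T\vdash e:\mathsf{Bool}$. Compatibility $T_1\parallel T_2$: $B\parallel B$; $\alpha\parallel\alpha$; $\{x{:}T_1\mid e\}\parallel T_2$ and $T_1\parallel\{x{:}T_2\mid e\}$ if $T_1\parallel T_2$; $x{:}T_{11}\to T_{12}\parallel x{:}T_{21}\to T_{22}$ if $T_{11}\parallel T_{21}$ and $T_{12}\parallel T_{22}$; $\forall\alpha.T_1\parallel\forall\alpha.T_2$ if $T_1\parallel T_2$. Conversion: $T_1\Rrightarrow T_2$ if $T_1=T[e_1/x]$, $T_2=T[e_2/x]$ and $e_1\longrightarrow e_2$ for some $T,x,e_1,e_2$; $\equiv$ is the symmetric transitive closure of $\Rrightarrow$. Typing rules: $\Gamma\vdash x:T$ if $\vdash\Gamma$, $x{:}T\in\Gamma$; $\Gamma\vdash k:\mathsf{ty}(k)$ if $\vdash\Gamma$; $\Gamma\vdash\mathtt{op}(e_1,\dots,e_n):T_0[e_1/x_1,\dots,e_n/x_n]$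 if $\vdash\Gamma$, $\mathsf{ty}(\mathtt{op})=x_1{:}T_1\to\dots\to x_n{:}T_n\to T_0$ and $\Gamma\vdash e_i:T_i[e_1/x_1,\dots,e_{i-1}/x_{i-1}]$ for all $i$; $\Gamma\vdash\lambda x{:}T_1.e:x{:}T_1\to T_2$ if $\Gamma,x{:}T_1\vdash e:T_2$; $\Gamma\vdash\langle T_1\Rightarrow T_2\rangle^\ell:T_1\to T_2$ if $\Gamma\vdash T_1$, $\Gamma\vdash T_2$, $T_1\parallel T_2$; $\Gamma\vdash e_1\,e_2:T_2[e_2/x]$ if $\Gamma\vdash e_1:x{:}T_1\to T_2$, $\Gamma\vdash e_2:T_1$, $\Gamma\vdash T_2[e_2/x]$; $\Gamma\vdash\Lambda\alpha.e:\forall\alpha.T$ if $\Gamma,\alpha\vdash e:T$; $\Gamma\vdash e\,T_2:T_1[T_2/\alpha]$ if $\Gamma\vdash e:\forall\alpha.T_1$, $\Gamma\vdash T_2$; $\Gamma\vdash\langle\!\langle\{x{:}T_1\mid e_1\},e_2\rangle\!\rangle^\ell:\{x{:}T_1\mid e_1\}$ if $\Gamma\vdash\{x{:}T_1\mid e_1\}$, $\Gamma\vdash e_2:T_1$; $\Gamma\vdash\langle\{x{:}T_1\mid e_1\},e_2,v\rangle^\ell:\{x{:}T_1\mid e_1\}$ if $\vdash\Gamma$, $\emptyset\vdash\{x{:}T_1\mid e_1\}$, $\emptyset\vdash v:T_1$, $\emptyset\vdash e_2:\mathsf{Bool}$, $e_1[v/x]\longrightarrow^* e_2$; $\Gamma\vdash\Uparrow\ell:T$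 if $\vdash\Gamma$, $\emptyset\vdash T$; $\Gamma\vdash e:T_2$ if $\vdash\Gamma$, $\emptyset\vdash e:T_1$, $\emptyset\vdash T_2$, $T_1\equiv T_2$; $\Gamma\vdash v:T$ if $\vdash\Gamma$, $\emptyset\vdash v:\{x{:}T\mid e\}$; $\Gamma\vdash v:\{x{:}T\mid e\}$ if $\vdash\Gamma$, $\emptyset\vdash v:T$, $\emptyset\vdash\{x{:}T\mid e\}$, $e[v/x]\longrightarrow^*\mathsf{true}$. Refinements: $\mathit{refines}(\{x{:}T\mid e\})=\{\lambda x{:}T.e\}\cup\mathit{refines}(T)$, and $\mathit{refines}(T)=\emptyset$ if $T$ is not a refinement type. *)

theory Defs
  imports Main
begin

section \<open>Syntax of F_H (locally de Bruijn: one shared index space for term and type variables)\<close>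

text \<open>Index 0 refers to the innermost binder.  Binders: Lam T e binds in e; TLam e binds
  a type variable in e; TFun T1 T2 binds x in T2; TAll T binds alpha in T;
  TRef T e (the refinement type {x:T | e}) binds x in e; Check T e1 e2 l
  (the term <<{x:T|e1}, e2>>^l) and Active T e1 e2 v l (the term <{x:T|e1}, e2, v>^l)
  bind x in e1 only.\<close>

datatype ('b, 'k, 'o) ty =
    TBase 'b
  | TVar nat
  | TFun "('b, 'k, 'o) ty" "('b, 'k, 'o) ty"
  | TAll "('b, 'k, 'o) ty"
  | TRef "('b, 'k, 'o) ty" "('b, 'k, 'o) tm"
and ('b, 'k, 'o) tm =
    Var nat
  | Const 'k
  | Lam "('b, 'k, 'o) ty" "('b, 'k, 'o) tm"
  | TLam "('b, 'k, 'o) tm"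
  | Cast "('b, 'k, 'o) ty" "('b, 'k, 'o) ty" nat
  | Op 'o "('b, 'k, 'o) tm list"
  | App "('b, 'k, 'o) tm" "('b, 'k, 'o) tm"
  | TApp "('b, 'k, 'o) tm" "('b, 'k, 'o) ty"
  | Check "('b, 'k, 'o) ty" "('b, 'k, 'o) tm" "('b, 'k, 'o) tm" nat
  | Active "('b, 'k, 'o) ty" "('b, 'k, 'o) tm" "('b, 'k, 'o) tm" "('b, 'k, 'o) tm" nat
  | Blame nat

primrec shift_ty :: "nat \<Rightarrow> nat \<Rightarrow> ('b,'k,'o) ty \<Rightarrow> ('b,'k,'o) ty"
  and shift_tm :: "nat \<Rightarrow> nat \<Rightarrow> ('b,'k,'o) tm \<Rightarrow> ('b,'k,'o) tm" where
  "shift_ty d c (TBase B) = TBase B"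
| "shift_ty d c (TVar n) = TVar (if n < c then n else n + d)"
| "shift_ty d c (TFun T1 T2) = TFun (shift_ty d c T1) (shift_ty d (Suc c) T2)"
| "shift_ty d c (TAll T) = TAll (shift_ty d (Suc c) T)"
| "shift_ty d c (TRef T e) = TRef (shift_ty d c T) (shift_tm d (Suc c) e)"
| "shift_tm d c (Var n) = Var (if n < c then n else n + d)"
| "shift_tm d c (Const k) = Const k"
| "shift_tm d c (Lam T e) = Lam (shift_ty d c T) (shift_tm d (Suc c) e)"
| "shift_tm d c (TLam e) = TLam (shift_tm d (Suc c) e)"
| "shift_tm d c (Cast T1 T2 l) = Cast (shift_ty d c T1) (shift_ty d c T2) l"
| "shift_tm d c (Op p es) = Op p (map (shift_tm d c) es)"
| "shift_tm d c (App e1 e2) = App (shift_tm d c e1) (shift_tm d c e2)"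
| "shift_tm d c (TApp e T) = TApp (shift_tm d c e) (shift_ty d c T)"
| "shift_tm d c (Check T e1 e2 l) = Check (shift_ty d c T) (shift_tm d (Suc c) e1) (shift_tm d c e2) l"
| "shift_tm d c (Active T e1 e2 v l) =
     Active (shift_ty d c T) (shift_tm d (Suc c) e1) (shift_tm d c e2) (shift_tm d c v) l"
| "shift_tm d c (Blame l) = Blame l"

text \<open>Capture-avoiding substitution of a term s for the term variable with index k
  (the variable is removed from the context; s lives in the context outside it).\<close>
primrec subst_ty :: "nat \<Rightarrow> ('b,'k,'o) tm \<Rightarrow> ('b,'k,'o) ty \<Rightarrow> ('b,'k,'o) ty"
  and subst_tm :: "nat \<Rightarrow> ('b,'k,'o) tm \<Rightarrow> ('b,'k,'o) tm \<Rightarrow> ('b,'k,'o) tm" where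
  "subst_ty k s (TBase B) = TBase B"
| "subst_ty k s (TVar n) = TVar (if k < n then n - 1 else n)"
| "subst_ty k s (TFun T1 T2) = TFun (subst_ty k s T1) (subst_ty (Suc k) s T2)"
| "subst_ty k s (TAll T) = TAll (subst_ty (Suc k) s T)"
| "subst_ty k s (TRef T e) = TRef (subst_ty k s T) (subst_tm (Suc k) s e)"
| "subst_tm k s (Var n) = (if n = k then shift_tm k 0 s else Var (if k < n then n - 1 else n))"
| "subst_tm k s (Const c) = Const c"
| "subst_tm k s (Lam T e) = Lam (subst_ty k s T) (subst_tm (Suc k) s e)"
| "subst_tm k s (TLam e) = TLam (subst_tm (Suc k) s e)"
| "subst_tm k s (Cast T1 T2 l) = Cast (subst_ty k s T1) (subst_ty k s T2) l"
| "subst_tm k s (Op p es) = Op p (map (subst_tm k s) es)"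
| "subst_tm k s (App e1 e2) = App (subst_tm k s e1) (subst_tm k s e2)"
| "subst_tm k s (TApp e T) = TApp (subst_tm k s e) (subst_ty k s T)"
| "subst_tm k s (Check T e1 e2 l) = Check (subst_ty k s T) (subst_tm (Suc k) s e1) (subst_tm k s e2) l"
| "subst_tm k s (Active T e1 e2 v l) =
     Active (subst_ty k s T) (subst_tm (Suc k) s e1) (subst_tm k s e2) (subst_tm k s v) l"
| "subst_tm k s (Blame l) = Blame l"

primrec tsubst_ty :: "nat \<Rightarrow> ('b,'k,'o) ty \<Rightarrow> ('b,'k,'o) ty \<Rightarrow> ('b,'k,'o) ty"
  and tsubst_tm :: "nat \<Rightarrow> ('b,'k,'o) ty \<Rightarrow> ('b,'k,'o) tm \<Rightarrow> ('b,'k,'o) tm" where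
  "tsubst_ty k S (TBase B) = TBase B"
| "tsubst_ty k S (TVar n) = (if n = k then shift_ty k 0 S else TVar (if k < n then n - 1 else n))"
| "tsubst_ty k S (TFun T1 T2) = TFun (tsubst_ty k S T1) (tsubst_ty (Suc k) S T2)"
| "tsubst_ty k S (TAll T) = TAll (tsubst_ty (Suc k) S T)"
| "tsubst_ty k S (TRef T e) = TRef (tsubst_ty k S T) (tsubst_tm (Suc k) S e)"
| "tsubst_tm k S (Var n) = Var (if k < n then n - 1 else n)"
| "tsubst_tm k S (Const c) = Const c"
| "tsubst_tm k S (Lam T e) = Lam (tsubst_ty k S T) (tsubst_tm (Suc k) S e)"
| "tsubst_tm k S (TLam e) = TLam (tsubst_tm (Suc k) S e)"
| "tsubst_tm k S (Cast T1 T2 l) = Cast (tsubst_ty k S T1) (tsubst_ty k S T2) l"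
| "tsubst_tm k S (Op p es) = Op p (map (tsubst_tm k S) es)"
| "tsubst_tm k S (App e1 e2) = App (tsubst_tm k S e1) (tsubst_tm k S e2)"
| "tsubst_tm k S (TApp e T) = TApp (tsubst_tm k S e) (tsubst_ty k S T)"
| "tsubst_tm k S (Check T e1 e2 l) = Check (tsubst_ty k S T) (tsubst_tm (Suc k) S e1) (tsubst_tm k S e2) l"
| "tsubst_tm k S (Active T e1 e2 v l) =
     Active (tsubst_ty k S T) (tsubst_tm (Suc k) S e1) (tsubst_tm k S e2) (tsubst_tm k S v) l"
| "tsubst_tm k S (Blame l) = Blame l"

text \<open>Simultaneous substitution T[e1/x1,...,em/xm], where in T the variable x1 is the
  outermost of the m innermost binders (x_m has index 0).\<close>
fun substs_ty :: "('b,'k,'o) tm list \<Rightarrow> ('b,'k,'o) ty \<Rightarrow> ('b,'k,'o) ty" where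
  "substs_ty [] T = T"
| "substs_ty (e # es) T = substs_ty es (subst_ty (length es) e T)"

fun is_val :: "('b,'k,'o) tm \<Rightarrow> bool" where
  "is_val (Const k) = True"
| "is_val (Lam T e) = True"
| "is_val (TLam e) = True"
| "is_val (Cast T1 T2 l) = True"
| "is_val _ = False"

fun is_ref :: "('b,'k,'o) ty \<Rightarrow> bool" where
  "is_ref (TRef T e) = True"
| "is_ref _ = False"

fun unref :: "('b,'k,'o) ty \<Rightarrow> ('b,'k,'o) ty" where
  "unref (TRef T e) = unref T"
| "unref T = T"

fun refines :: "('b,'k,'o) ty \<Rightarrow> ('b,'k,'o) tm set" where
  "refines (TRef T e) = insert (Lam T e) (refines T)"
| "refines T = {}"

section \<open>Language parameters: base types, constants, primitive operations\<close>

text \<open>boolB is the base type Bool; tt / ff are the constants true / false;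
  cbase k is the base type B with k in K_B; cty k = ty(k);
  oty p = ([T1,...,Tn], T0) for ty(op) = x1:T1 -> ... -> xn:Tn -> T0 (Ti in de Bruijn
  context x1..x(i-1), T0 in context x1..xn); oden p = the partial denotation.\<close>
record ('b, 'k, 'o) fh_sig =
  boolB :: 'b
  tt :: 'k
  ff :: 'k
  cbase :: "'k \<Rightarrow> 'b"
  cty :: "'k \<Rightarrow> ('b,'k,'o) ty"
  oty :: "'o \<Rightarrow> ('b,'k,'o) ty list \<times> ('b,'k,'o) ty"
  oden :: "'o \<Rightarrow> 'k list \<Rightarrow> 'k option"

section \<open>Semantics\<close>

inductive red :: "('b,'k,'o,'x) fh_sig_scheme \<Rightarrow> ('b,'k,'o) tm \<Rightarrow> ('b,'k,'o) tm \<Rightarrow> bool"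
  for L where
  red_op: "oden L p ks = Some k \<Longrightarrow> red L (Op p (map Const ks)) (Const k)"
| red_beta: "is_val v \<Longrightarrow> red L (App (Lam T e) v) (subst_tm 0 v e)"
| red_tbeta: "red L (TApp (TLam e) T) (tsubst_tm 0 T e)"
| red_base: "is_val v \<Longrightarrow> red L (App (Cast (TBase B) (TBase B) l) v) v"
| red_fun: "is_val v \<Longrightarrow> red L (App (Cast (TFun T11 T12) (TFun T21 T22) l) v)
     (Lam T21
        (App (Lam (shift_ty 1 0 T11)
                (App (Cast (shift_ty 1 1 T12) (shift_ty 1 0 T22) l)
                     (App (shift_tm 2 0 v) (Var 0))))
             (App (Cast (shift_ty 1 0 T21) (shift_ty 1 0 T11) l) (Var 0))))"
| red_forall: "is_val v \<Longrightarrow> red L (App (Cast (TAll T1) (TAll T2) l) v)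
     (TLam (App (Cast T1 T2 l) (TApp (shift_tm 1 0 v) (TVar 0))))"
| red_forget: "is_val v \<Longrightarrow> red L (App (Cast (TRef T1 e1) T2 l) v) (App (Cast T1 T2 l) v)"
| red_precheck: "is_val v \<Longrightarrow> \<not> is_ref T1 \<Longrightarrow>
     red L (App (Cast T1 (TRef T2 e2) l) v) (Check T2 e2 (App (Cast T1 T2 l) v) l)"
| red_check: "is_val v \<Longrightarrow> red L (Check T e v l) (Active T e (subst_tm 0 v e) v l)"
| red_ok: "is_val v \<Longrightarrow> red L (Active T e (Const (tt L)) v l) v"
| red_fail: "is_val v \<Longrightarrow> red L (Active T e (Const (ff L)) v l) (Blame l)"

text \<open>Evaluation contexts, as lists of frames (outermost frame first).\<close>
datatype ('b, 'k, 'o) frame =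
    FOp 'o "('b,'k,'o) tm list" "('b,'k,'o) tm list"
  | FAppL "('b,'k,'o) tm"
  | FAppR "('b,'k,'o) tm"
  | FTApp "('b,'k,'o) ty"
  | FCheck "('b,'k,'o) ty" "('b,'k,'o) tm" nat
  | FActive "('b,'k,'o) ty" "('b,'k,'o) tm" "('b,'k,'o) tm" nat

fun frame_ok :: "('b,'k,'o) frame \<Rightarrow> bool" where
  "frame_ok (FOp p vs es) = (\<forall>v \<in> set vs. is_val v)"
| "frame_ok (FAppR v) = is_val v"
| "frame_ok (FActive T e v l) = is_val v"
| "frame_ok _ = True"

fun plug_frame :: "('b,'k,'o) frame \<Rightarrow> ('b,'k,'o) tm \<Rightarrow> ('b,'k,'o) tm" where
  "plug_frame (FOp p vs es) e = Op p (vs @ e # es)"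
| "plug_frame (FAppL e2) e = App e e2"
| "plug_frame (FAppR v) e = App v e"
| "plug_frame (FTApp T) e = TApp e T"
| "plug_frame (FCheck T e1 l) e = Check T e1 e l"
| "plug_frame (FActive T e1 v l) e = Active T e1 e v l"

fun plug :: "('b,'k,'o) frame list \<Rightarrow> ('b,'k,'o) tm \<Rightarrow> ('b,'k,'o) tm" where
  "plug [] e = e"
| "plug (f # E) e = plug_frame f (plug E e)"

inductive step :: "('b,'k,'o,'x) fh_sig_scheme \<Rightarrow> ('b,'k,'o) tm \<Rightarrow> ('b,'k,'o) tm \<Rightarrow> bool"
  for L where
  step_red: "\<forall>f \<in> set E. frame_ok f \<Longrightarrow> red L e1 e2 \<Longrightarrow> step L (plug E e1) (plug E e2)"
| step_blame: "\<forall>f \<in> set E. frame_ok f \<Longrightarrow> E \<noteq> [] \<Longrightarrow> step L (plug E (Blame l)) (Blame l)"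

abbreviation steps :: "('b,'k,'o,'x) fh_sig_scheme \<Rightarrow> ('b,'k,'o) tm \<Rightarrow> ('b,'k,'o) tm \<Rightarrow> bool" where
  "steps L \<equiv> (step L)\<^sup>*\<^sup>*"

section \<open>Typing\<close>

datatype ('b, 'k, 'o) entry = EVar "('b,'k,'o) ty" | ETVar

text \<open>Contexts: the head of the list is the innermost (most recently added) entry.\<close>
type_synonym ('b, 'k, 'o) ctx = "('b,'k,'o) entry list"

inductive compat :: "('b,'k,'o) ty \<Rightarrow> ('b,'k,'o) ty \<Rightarrow> bool" where
  "compat (TBase B) (TBase B)"
| "compat (TVar a) (TVar a)"
| "compat T1 T2 \<Longrightarrow> compat (TRef T1 e) T2"
| "compat T1 T2 \<Longrightarrow> compat T1 (TRef T2 e)"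
| "compat T11 T21 \<Longrightarrow> compat T12 T22 \<Longrightarrow> compat (TFun T11 T12) (TFun T21 T22)"
| "compat T1 T2 \<Longrightarrow> compat (TAll T1) (TAll T2)"

definition conv1 :: "('b,'k,'o,'x) fh_sig_scheme \<Rightarrow> ('b,'k,'o) ty \<Rightarrow> ('b,'k,'o) ty \<Rightarrow> bool" where
  "conv1 L T1 T2 \<longleftrightarrow> (\<exists>T e1 e2. T1 = subst_ty 0 e1 T \<and> T2 = subst_ty 0 e2 T \<and> step L e1 e2)"

definition tyequiv :: "('b,'k,'o,'x) fh_sig_scheme \<Rightarrow> ('b,'k,'o) ty \<Rightarrow> ('b,'k,'o) ty \<Rightarrow> bool" where
  "tyequiv L = (\<lambda>T1 T2. conv1 L T1 T2 \<or> conv1 L T2 T1)\<^sup>+\<^sup>+"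

inductive wfctx :: "('b,'k,'o,'x) fh_sig_scheme \<Rightarrow> ('b,'k,'o) ctx \<Rightarrow> bool"
  and wfty :: "('b,'k,'o,'x) fh_sig_scheme \<Rightarrow> ('b,'k,'o) ctx \<Rightarrow> ('b,'k,'o) ty \<Rightarrow> bool"
  and typing :: "('b,'k,'o,'x) fh_sig_scheme \<Rightarrow> ('b,'k,'o) ctx \<Rightarrow> ('b,'k,'o) tm \<Rightarrow> ('b,'k,'o) ty \<Rightarrow> bool"
  for L where
  wf_empty: "wfctx L []"
| wf_var: "wfctx L G \<Longrightarrow> wfty L G T \<Longrightarrow> wfctx L (EVar T # G)"
| wf_tvar: "wfctx L G \<Longrightarrow> wfctx L (ETVar # G)"
| wfty_base: "wfctx L G \<Longrightarrow> wfty L G (TBase B)"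
| wfty_tvar: "wfctx L G \<Longrightarrow> a < length G \<Longrightarrow> G ! a = ETVar \<Longrightarrow> wfty L G (TVar a)"
| wfty_fun: "wfty L G T1 \<Longrightarrow> wfty L (EVar T1 # G) T2 \<Longrightarrow> wfty L G (TFun T1 T2)"
| wfty_all: "wfty L (ETVar # G) T \<Longrightarrow> wfty L G (TAll T)"
| wfty_ref: "wfty L G T \<Longrightarrow> typing L (EVar T # G) e (TBase (boolB L)) \<Longrightarrow> wfty L G (TRef T e)"
| t_var: "wfctx L G \<Longrightarrow> x < length G \<Longrightarrow> G ! x = EVar T \<Longrightarrow>
     typing L G (Var x) (shift_ty (Suc x) 0 T)"
| t_const: "wfctx L G \<Longrightarrow> typing L G (Const k) (cty L k)"
| t_op: "wfctx L G \<Longrightarrow> oty L p = (Ts, T0) \<Longrightarrow> length es = length Ts \<Longrightarrow>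
     (\<forall>i < length Ts. typing L G (es ! i) (substs_ty (take i es) (Ts ! i))) \<Longrightarrow>
     typing L G (Op p es) (substs_ty es T0)"
| t_lam: "typing L (EVar T1 # G) e T2 \<Longrightarrow> typing L G (Lam T1 e) (TFun T1 T2)"
| t_cast: "wfty L G T1 \<Longrightarrow> wfty L G T2 \<Longrightarrow> compat T1 T2 \<Longrightarrow>
     typing L G (Cast T1 T2 l) (TFun T1 (shift_ty 1 0 T2))"
| t_app: "typing L G e1 (TFun T1 T2) \<Longrightarrow> typing L G e2 T1 \<Longrightarrow> wfty L G (subst_ty 0 e2 T2) \<Longrightarrow>
     typing L G (App e1 e2) (subst_ty 0 e2 T2)"
| t_tlam: "typing L (ETVar # G) e T \<Longrightarrow> typing L G (TLam e) (TAll T)"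
| t_tapp: "typing L G e (TAll T1) \<Longrightarrow> wfty L G T2 \<Longrightarrow> typing L G (TApp e T2) (tsubst_ty 0 T2 T1)"
| t_check: "wfty L G (TRef T1 e1) \<Longrightarrow> typing L G e2 T1 \<Longrightarrow>
     typing L G (Check T1 e1 e2 l) (TRef T1 e1)"
| t_active: "wfctx L G \<Longrightarrow> wfty L [] (TRef T1 e1) \<Longrightarrow> is_val v \<Longrightarrow> typing L [] v T1 \<Longrightarrow>
     typing L [] e2 (TBase (boolB L)) \<Longrightarrow> steps L (subst_tm 0 v e1) e2 \<Longrightarrow>
     typing L G (Active T1 e1 e2 v l) (TRef T1 e1)"
| t_blame: "wfctx L G \<Longrightarrow> wfty L [] T \<Longrightarrow> typing L G (Blame l) T"
| t_conv: "wfctx L G \<Longrightarrow> typing L [] e T1 \<Longrightarrow> wfty L [] T2 \<Longrightarrow> tyequiv L T1 T2 \<Longrightarrow>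
     typing L G e T2"
| t_forget: "wfctx L G \<Longrightarrow> is_val v \<Longrightarrow> typing L [] v (TRef T e) \<Longrightarrow> typing L G v T"
| t_exact: "wfctx L G \<Longrightarrow> is_val v \<Longrightarrow> typing L [] v T \<Longrightarrow> wfty L [] (TRef T e) \<Longrightarrow>
     steps L (subst_tm 0 v e) (Const (tt L)) \<Longrightarrow> typing L G v (TRef T e)"

section \<open>Standing assumptions on constants and operations\<close>

definition op_arg_ok :: "('b,'k,'o,'x) fh_sig_scheme \<Rightarrow> ('b,'k,'o) ty \<Rightarrow> 'k list \<Rightarrow> 'k \<Rightarrow> bool" where
  "op_arg_ok L Ti prev k \<longleftrightarrow>
     unref Ti = TBase (cbase L k) \<and>
     (\<forall>l. steps L (App (Cast (unref Ti) (substs_ty (map Const prev) Ti) l) (Const k)) (Const k))"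

definition fh_sig_ok :: "('b,'k,'o,'x) fh_sig_scheme \<Rightarrow> bool" where
  "fh_sig_ok L \<longleftrightarrow>
     tt L \<noteq> ff L \<and> cbase L (tt L) = boolB L \<and> cbase L (ff L) = boolB L \<and>
     (\<forall>k. cbase L k = boolB L \<longrightarrow> k = tt L \<or> k = ff L) \<and>
     (\<forall>k. unref (cty L k) = TBase (cbase L k) \<and> wfty L [] (cty L k) \<and>
          (\<forall>l. steps L (App (Cast (TBase (cbase L k)) (cty L k) l) (Const k)) (Const k))) \<and>
     (\<forall>p Ts T0. oty L p = (Ts, T0) \<longrightarrow>
        (\<forall>T \<in> set (T0 # Ts). \<exists>B. unref T = TBase B) \<and>
        (\<forall>ks. length ks \<noteq> length Ts \<longrightarrow> oden L p ks = None) \<and>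
        (\<forall>ks. length ks = length Ts \<longrightarrow>
           ((\<forall>i < length Ts. op_arg_ok L (Ts ! i) (take i ks) (ks ! i)) \<longrightarrow>
              (\<exists>k. oden L p ks = Some k \<and> op_arg_ok L T0 ks k)) \<and>
           (\<not> (\<forall>i < length Ts. op_arg_ok L (Ts ! i) (take i ks) (ks ! i)) \<longrightarrow>
              oden L p ks = None)))"

end

theory Submission
  imports Defs
begin

lemma shift_0:
  fixes T :: "('b,'k,'o) ty" and e :: "('b,'k,'o) tm"
  shows "shift_ty 0 c T = T" and "shift_tm 0 c e = e"
  by (induct T and e arbitrary: c and c rule: ty.induct tm.induct) (auto intro: map_idI)

lemma shift_shift:
  fixes T :: "('b,'k,'o) ty" and e :: "('b,'k,'o) tm"
  shows "t \<le> c \<Longrightarrow> c \<le> t + n \<Longrightarrow> shift_ty d c (shift_ty n t T) = shift_ty (d+n) t T"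
    and "t \<le> c \<Longrightarrow> c \<le> t + n \<Longrightarrow> shift_tm d c (shift_tm n t e) = shift_tm (d+n) t e"
  by (induct T and e arbitrary: t c and t c rule: ty.induct tm.induct) auto

lemma subst_shift:
  fixes T :: "('b,'k,'o) ty" and e :: "('b,'k,'o) tm"
  shows "t \<le> k \<Longrightarrow> k \<le> t + n \<Longrightarrow> subst_ty k s (shift_ty (Suc n) t T) = shift_ty n t T"
    and "t \<le> k \<Longrightarrow> k \<le> t + n \<Longrightarrow> subst_tm k s (shift_tm (Suc n) t e) = shift_tm n t e"
  by (induct T and e arbitrary: t k and t k rule: ty.induct tm.induct) auto

lemma tsubst_shift:
  fixes T :: "('b,'k,'o) ty" and e :: "('b,'k,'o) tm"
  shows "t \<le> k \<Longrightarrow> k \<le> t + n \<Longrightarrow> tsubst_ty k S (shift_ty (Suc n) t T) = shift_ty n t T"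
    and "t \<le> k \<Longrightarrow> k \<le> t + n \<Longrightarrow> tsubst_tm k S (shift_tm (Suc n) t e) = shift_tm n t e"
  by (induct T and e arbitrary: t k and t k rule: ty.induct tm.induct) auto

lemma is_val_shift[simp]: "is_val (shift_tm d c e) = is_val e"
  by (cases e) auto
lemma is_val_subst: "is_val e \<Longrightarrow> is_val (subst_tm k s e)"
  by (cases e) auto
lemma is_val_tsubst: "is_val e \<Longrightarrow> is_val (tsubst_tm k S e)"
  by (cases e) auto

inductive Hty :: "('b,'k,'o) tm \<Rightarrow> ('b,'k,'o) tm \<Rightarrow> nat \<Rightarrow> ('b,'k,'o) ty \<Rightarrow> ('b,'k,'o) ty \<Rightarrow> bool"
  and Htm :: "('b,'k,'o) tm \<Rightarrow> ('b,'k,'o) tm \<Rightarrow> nat \<Rightarrow> ('b,'k,'o) tm \<Rightarrow> ('b,'k,'o) tm \<Rightarrow> bool"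
  for e1 e2 where
  HTBase: "Hty e1 e2 n (TBase B) (TBase B)"
| HTVar: "Hty e1 e2 n (TVar a) (TVar a)"
| HTFun: "Hty e1 e2 n T1 T1' \<Longrightarrow> Hty e1 e2 (Suc n) T2 T2' \<Longrightarrow> Hty e1 e2 n (TFun T1 T2) (TFun T1' T2')"
| HTAll: "Hty e1 e2 (Suc n) T T' \<Longrightarrow> Hty e1 e2 n (TAll T) (TAll T')"
| HTRef: "Hty e1 e2 n T T' \<Longrightarrow> Htm e1 e2 (Suc n) e e' \<Longrightarrow> Hty e1 e2 n (TRef T e) (TRef T' e')"
| HHole: "Htm e1 e2 n (shift_tm n 0 e1) (shift_tm n 0 e2)"
| HVar: "Htm e1 e2 n (Var x) (Var x)"
| HConst: "Htm e1 e2 n (Const c) (Const c)"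
| HLam: "Hty e1 e2 n T T' \<Longrightarrow> Htm e1 e2 (Suc n) e e' \<Longrightarrow> Htm e1 e2 n (Lam T e) (Lam T' e')"
| HTLam: "Htm e1 e2 (Suc n) e e' \<Longrightarrow> Htm e1 e2 n (TLam e) (TLam e')"
| HCast: "Hty e1 e2 n T1 T1' \<Longrightarrow> Hty e1 e2 n T2 T2' \<Longrightarrow> Htm e1 e2 n (Cast T1 T2 l) (Cast T1' T2' l)"
| HOp: "list_all2 (Htm e1 e2 n) es es' \<Longrightarrow> Htm e1 e2 n (Op p es) (Op p es')"
| HApp: "Htm e1 e2 n a a' \<Longrightarrow> Htm e1 e2 n b b' \<Longrightarrow> Htm e1 e2 n (App a b) (App a' b')"
| HTApp: "Htm e1 e2 n a a' \<Longrightarrow> Hty e1 e2 n T T' \<Longrightarrow> Htm e1 e2 n (TApp a T) (TApp a' T')"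
| HCheck: "Hty e1 e2 n T T' \<Longrightarrow> Htm e1 e2 (Suc n) a a' \<Longrightarrow> Htm e1 e2 n b b' \<Longrightarrow>
     Htm e1 e2 n (Check T a b l) (Check T' a' b' l)"
| HActive: "Hty e1 e2 n T T' \<Longrightarrow> Htm e1 e2 (Suc n) a a' \<Longrightarrow> Htm e1 e2 n b b' \<Longrightarrow> Htm e1 e2 n c c' \<Longrightarrow>
     Htm e1 e2 n (Active T a b c l) (Active T' a' b' c' l)"
| HBlame: "Htm e1 e2 n (Blame l) (Blame l)"

lemma H_refl:
  fixes T :: "('b,'k,'o) ty" and e :: "('b,'k,'o) tm"
  shows "Hty e1 e2 n T T" and "Htm e1 e2 n e e"
  by (induct T and e arbitrary: n and n rule: ty.induct tm.induct)
     (auto intro: Hty_Htm.intros list.rel_refl_strong)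

lemma H_subst_gen:
  fixes T :: "('b,'k,'o) ty" and e :: "('b,'k,'o) tm"
  shows "Hty e1 e2 n (subst_ty n e1 T) (subst_ty n e2 T)" and "Htm e1 e2 n (subst_tm n e1 e) (subst_tm n e2 e)"
  by (induct T and e arbitrary: n and n rule: ty.induct tm.induct)
     (auto intro!: Hty_Htm.intros list.rel_refl_strong simp: list.rel_map)

lemma H_shift:
  shows "Hty e1 e2 n T T' \<Longrightarrow> c \<le> n \<Longrightarrow> Hty e1 e2 (n+d) (shift_ty d c T) (shift_ty d c T')"
    and "Htm e1 e2 n a a' \<Longrightarrow> c \<le> n \<Longrightarrow> Htm e1 e2 (n+d) (shift_tm d c a) (shift_tm d c a')"
proof (induct arbitrary: c and c rule: Hty_Htm.inducts)
  case (HHole n)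
  then show ?case using shift_shift(2)[of 0 c n d e1] shift_shift(2)[of 0 c n d e2]
    by (simp add: add.commute) (rule Hty_Htm.HHole)
next
  case (HOp n es es' p)
  then show ?case by (auto intro!: Hty_Htm.intros simp: list.rel_map elim!: list.rel_mono_strong)
qed (auto intro!: Hty_Htm.intros)

lemma H_subst:
  shows "Hty e1 e2 m T T' \<Longrightarrow> m = Suc k \<Longrightarrow> Htm e1 e2 0 s s' \<Longrightarrow> Hty e1 e2 k (subst_ty k s T) (subst_ty k s' T')"
    and "Htm e1 e2 m a a' \<Longrightarrow> m = Suc k \<Longrightarrow> Htm e1 e2 0 s s' \<Longrightarrow> Htm e1 e2 k (subst_tm k s a) (subst_tm k s' a')"
proof (induct arbitrary: k and k rule: Hty_Htm.inducts)
  case (HHole n)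
  then show ?case using subst_shift(2)[of 0 k k s e1] subst_shift(2)[of 0 k k s' e2]
    by simp (rule Hty_Htm.HHole)
next
  case (HVar n x)
  then show ?case using H_shift(2)[of e1 e2 0 s s' 0 k] by (auto intro: Hty_Htm.intros)
next
  case (HOp n es es' p)
  then show ?case by (auto intro!: Hty_Htm.intros simp: list.rel_map elim!: list.rel_mono_strong)
qed (auto intro!: Hty_Htm.intros)

lemma H_tsubst:
  shows "Hty e1 e2 m T T' \<Longrightarrow> m = Suc k \<Longrightarrow> Hty e1 e2 0 S S' \<Longrightarrow> Hty e1 e2 k (tsubst_ty k S T) (tsubst_ty k S' T')"
    and "Htm e1 e2 m a a' \<Longrightarrow> m = Suc k \<Longrightarrow> Hty e1 e2 0 S S' \<Longrightarrow> Htm e1 e2 k (tsubst_tm k S a) (tsubst_tm k S' a')"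
proof (induct arbitrary: k and k rule: Hty_Htm.inducts)
  case (HHole n)
  then show ?case using tsubst_shift(2)[of 0 k k S e1] tsubst_shift(2)[of 0 k k S' e2]
    by simp (rule Hty_Htm.HHole)
next
  case (HTVar n x)
  then show ?case using H_shift(1)[of e1 e2 0 S S' 0 k] by (auto intro: Hty_Htm.intros)
next
  case (HOp n es es' p)
  then show ?case by (auto intro!: Hty_Htm.intros simp: list.rel_map elim!: list.rel_mono_strong)
qed (auto intro!: Hty_Htm.intros)

inductive rstep :: "('b,'k,'o,'x) fh_sig_scheme \<Rightarrow> ('b,'k,'o) tm \<Rightarrow> ('b,'k,'o) tm \<Rightarrow> bool"
  for L where
  r_red: "red L a b \<Longrightarrow> rstep L a b"
| r_appL: "rstep L a a' \<Longrightarrow> rstep L (App a b) (App a' b)"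
| r_appR: "is_val v \<Longrightarrow> rstep L b b' \<Longrightarrow> rstep L (App v b) (App v b')"
| r_tapp: "rstep L a a' \<Longrightarrow> rstep L (TApp a T) (TApp a' T)"
| r_op: "\<forall>v\<in>set vs. is_val v \<Longrightarrow> rstep L a a' \<Longrightarrow> rstep L (Op p (vs @ a # es)) (Op p (vs @ a' # es))"
| r_check: "rstep L a a' \<Longrightarrow> rstep L (Check T e a l) (Check T e a' l)"
| r_act: "is_val v \<Longrightarrow> rstep L a a' \<Longrightarrow> rstep L (Active T e a v l) (Active T e a' v l)"
| r_actv: "rstep L a a' \<Longrightarrow> rstep L (Active T e b a l) (Active T e b a' l)"

inductive blm :: "('b,'k,'o) tm \<Rightarrow> nat \<Rightarrow> bool" where
  b_base: "blm (Blame l) l"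
| b_appL: "blm a l \<Longrightarrow> blm (App a b) l"
| b_appR: "is_val v \<Longrightarrow> blm b l \<Longrightarrow> blm (App v b) l"
| b_tapp: "blm a l \<Longrightarrow> blm (TApp a T) l"
| b_op: "\<forall>v\<in>set vs. is_val v \<Longrightarrow> blm a l \<Longrightarrow> blm (Op p (vs @ a # es)) l"
| b_check: "blm a l \<Longrightarrow> blm (Check T e a l') l"
| b_act: "is_val v \<Longrightarrow> blm a l \<Longrightarrow> blm (Active T e a v l') l"
| b_actv: "blm a l \<Longrightarrow> blm (Active T e b a l') l"

definition lstep :: "('b,'k,'o,'x) fh_sig_scheme \<Rightarrow> ('b,'k,'o) tm \<Rightarrow> ('b,'k,'o) tm \<Rightarrow> bool" where
  "lstep L a b \<longleftrightarrow> rstep L a b \<or> (\<exists>l. blm a l \<and> a \<noteq> Blame l \<and> b = Blame l)"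

lemma red_val_no: "is_val a \<Longrightarrow> \<not> red L a b"
  by (cases a) (auto elim: red.cases)

lemma rstep_nval: "rstep L a b \<Longrightarrow> \<not> is_val a"
  by (induct rule: rstep.induct) (auto elim: red.cases)

lemma blm_nval: "blm a l \<Longrightarrow> \<not> is_val a"
  by (induct rule: blm.induct) auto

lemma blame_no_rstep: "\<not> rstep L (Blame l) b"
  by (auto elim: rstep.cases red.cases)

lemma red_app_vals: "red L (App a1 a2) b \<Longrightarrow> is_val a1 \<and> is_val a2"
  by (auto elim: red.cases)
lemma red_tapp_vals: "red L (TApp a T) b \<Longrightarrow> is_val a"
  by (auto elim: red.cases)
lemma red_op_vals: "red L (Op p es) b \<Longrightarrow> \<forall>e\<in>set es. is_val e"
  by (erule red.cases) auto
lemma red_check_vals: "red L (Check T e a l) b \<Longrightarrow> is_val a"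
  by (auto elim: red.cases)
lemma red_act_vals: "red L (Active T e a v l) b \<Longrightarrow> is_val a \<and> is_val v"
  by (auto elim: red.cases)

lemma split_unique:
  "\<forall>v\<in>set vs. is_val v \<Longrightarrow> \<forall>v\<in>set vs'. is_val v \<Longrightarrow> \<not> is_val a \<Longrightarrow> \<not> is_val a' \<Longrightarrow>
   vs @ a # es = vs' @ a' # es' \<Longrightarrow> vs = vs' \<and> a = a' \<and> es = es'"
proof (induct vs arbitrary: vs')
  case Nil then show ?case by (cases vs') auto
next
  case (Cons x vs) then show ?case by (cases vs') auto
qed

lemma red_det: assumes "tt L \<noteq> ff L" shows "red L a b \<Longrightarrow> red L a c \<Longrightarrow> b = c"
  apply (induct rule: red.induct)
  apply (erule red.cases; insert assms; simp add: inj_map_eq_map inj_def)+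
  done

lemma red_rstep: assumes tf: "tt L \<noteq> ff L" and rd: "red L a b" and rs: "rstep L a c" shows "b = c"
  using rs
proof cases
  case r_red then show ?thesis using red_det[OF tf] rd by blast
next
  case (r_op vs' x x' p' es')
  then have "\<not> is_val x" by (auto dest: rstep_nval)
  moreover have "\<forall>e\<in>set (vs' @ x # es'). is_val e" using rd r_op by (auto dest!: red_op_vals)
  ultimately show ?thesis by simp
next
  case (r_appL x x' y)
  then show ?thesis using rd red_app_vals rstep_nval by metis
next
  case (r_appR x y y')
  then show ?thesis using rd red_app_vals rstep_nval by metis
next
  case (r_tapp x x' T)
  then show ?thesis using rd red_tapp_vals rstep_nval by metis
next
  case (r_check x x' T e l)
  then show ?thesis using rd red_check_vals rstep_nval by metis
next
  case (r_act v x x' T e l)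
  then show ?thesis using rd red_act_vals rstep_nval by metis
next
  case (r_actv x x' T e y l)
  then show ?thesis using rd red_act_vals rstep_nval by metis
qed

lemma rstep_det: assumes tf: "tt L \<noteq> ff L" shows "rstep L a b \<Longrightarrow> rstep L a c \<Longrightarrow> b = c"
proof (induct arbitrary: c rule: rstep.induct)
  case (r_red a b)
  then show ?case using red_rstep[OF tf] by blast
next
  case (r_op vs a a' p es)
  from r_op(4) show ?case
  proof (cases rule: rstep.cases)
    case r_red
    then show ?thesis using red_rstep[OF tf] rstep.r_op[OF r_op(1,2)] by metis
  next
    case (r_op vs' b b' es')
    have "\<not> is_val a" "\<not> is_val b" using r_op rstep_nval \<open>rstep L a a'\<close> by metis+
    then have "vs = vs' \<and> a = b \<and> es = es'" using split_unique[of vs vs' a b es es'] r_op \<open>\<forall>v\<in>set vs. is_val v\<close>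
      by simp
    then show ?thesis using r_op \<open>\<And>c. rstep L a c \<Longrightarrow> a' = c\<close> by metis
  qed
next
  case (r_appL a a' b)
  from r_appL(3) show ?case
  proof cases
    case r_red then show ?thesis using red_rstep[OF tf] rstep.r_appL[OF r_appL(1)] by metis
  next
    case r_appL
    then show ?thesis using \<open>\<And>c. rstep L a c \<Longrightarrow> a' = c\<close> by simp
  next
    case r_appR
    then show ?thesis using \<open>rstep L a a'\<close> rstep_nval by metis
  qed
next
  case (r_appR v b b')
  from r_appR(4) show ?case
  proof cases
    case r_red then show ?thesis using red_rstep[OF tf] rstep.r_appR[OF r_appR(1,2)] by metis
  next
    case r_appL
    then show ?thesis using \<open>is_val v\<close> rstep_nval by metis
  next
    case r_appR
    then show ?thesis using \<open>\<And>c. rstep L b c \<Longrightarrow> b' = c\<close> by metis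
  qed
next
  case (r_tapp a a' T)
  from r_tapp(3) show ?case
  proof cases
    case r_red then show ?thesis using red_rstep[OF tf] rstep.r_tapp[OF r_tapp(1)] by metis
  next
    case r_tapp
    then show ?thesis using \<open>\<And>c. rstep L a c \<Longrightarrow> a' = c\<close> by metis
  qed
next
  case (r_check a a' T e l)
  from r_check(3) show ?case
  proof cases
    case r_red then show ?thesis using red_rstep[OF tf] rstep.r_check[OF r_check(1)] by metis
  next
    case r_check
    then show ?thesis using \<open>\<And>c. rstep L a c \<Longrightarrow> a' = c\<close> by metis
  qed
next
  case (r_act v a a' T e l)
  from r_act(4) show ?case
  proof cases
    case r_red then show ?thesis using red_rstep[OF tf] rstep.r_act[OF r_act(1,2)] by metis
  next
    case r_act
    then show ?thesis using \<open>\<And>c. rstep L a c \<Longrightarrow> a' = c\<close> by simp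
  next
    case r_actv
    then show ?thesis using \<open>is_val v\<close> rstep_nval by metis
  qed
next
  case (r_actv a a' T e b l)
  from r_actv(3) show ?case
  proof cases
    case r_red then show ?thesis using red_rstep[OF tf] rstep.r_actv[OF r_actv(1)] by metis
  next
    case r_act
    then show ?thesis using \<open>rstep L a a'\<close> rstep_nval by metis
  next
    case r_actv
    then show ?thesis using \<open>\<And>c. rstep L a c \<Longrightarrow> a' = c\<close> by metis
  qed
qed

lemma blm_no_rstep: "blm a l \<Longrightarrow> rstep L a b \<Longrightarrow> False"
proof (induct arbitrary: b rule: blm.induct)
  case (b_base l) then show ?case using blame_no_rstep by metis
next
  case (b_appL a l c)
  from b_appL(3) show ?case
    by cases (metis b_appL(1) blm_nval red_app_vals, metis b_appL(2), metis b_appL(1) blm_nval)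
next
  case (b_appR v c l)
  from b_appR(4) show ?case
    by cases (metis b_appR(2) blm_nval red_app_vals, metis b_appR(1) rstep_nval, metis b_appR(3))
next
  case (b_tapp a l T)
  from b_tapp(3) show ?case
    by cases (metis b_tapp(1) blm_nval red_tapp_vals, metis b_tapp(2))
next
  case (b_check a l T e l')
  from b_check(3) show ?case
    by cases (metis b_check(1) blm_nval red_check_vals, metis b_check(2))
next
  case (b_act v a l T e l')
  from b_act(4) show ?case
    by cases (metis b_act(2) blm_nval red_act_vals, metis b_act(3), metis b_act(1) rstep_nval)
next
  case (b_actv a l T e c l')
  from b_actv(3) show ?case
    by cases (metis b_actv(1) blm_nval red_act_vals, metis b_actv(1) blm_nval, metis b_actv(2))
next
  case (b_op vs a l p es)
  from b_op(4) show ?case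
  proof (cases rule: rstep.cases)
    case r_red
    then have "\<forall>e\<in>set (vs @ a # es). is_val e" by (metis red_op_vals)
    then show ?thesis using b_op(2) blm_nval by (metis Un_iff in_set_conv_decomp set_append)
  next
    case (r_op vs' c c' es')
    have "\<not> is_val a" "\<not> is_val c" using r_op b_op(2) rstep_nval blm_nval by metis+
    then have "vs = vs' \<and> a = c \<and> es = es'" using split_unique[of vs vs' a c es es'] r_op b_op(1)
      by simp
    then show ?thesis using r_op b_op(3) by metis
  qed
qed

lemma blm_det: "blm a l \<Longrightarrow> blm a l' \<Longrightarrow> l = l'"
proof (induct arbitrary: l' rule: blm.induct)
  case (b_base l) then show ?case by cases auto
next
  case (b_appL a l c)
  from b_appL(3) show ?case
    by cases (metis b_appL(2), metis b_appL(1) blm_nval)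
next
  case (b_appR v c l)
  from b_appR(4) show ?case
    by cases (metis b_appR(1) blm_nval, metis b_appR(3))
next
  case (b_tapp a l T)
  from b_tapp(3) show ?case
    by cases (metis b_tapp(2))
next
  case (b_check a l T e l0)
  from b_check(3) show ?case
    by cases (metis b_check(2))
next
  case (b_act v a l T e l0)
  from b_act(4) show ?case
    by cases (metis b_act(3), metis b_act(1) blm_nval)
next
  case (b_actv a l T e c l0)
  from b_actv(3) show ?case
    by cases (metis b_actv(1) blm_nval, metis b_actv(2))
next
  case (b_op vs a l p es)
  from b_op(4) show ?case
  proof (cases rule: blm.cases)
    case (b_op vs' c es')
    have "\<not> is_val a" "\<not> is_val c" using b_op b_op.hyps(2) blm_nval by metis+
    then have "vs = vs' \<and> a = c \<and> es = es'" using split_unique[of vs vs' a c es es'] b_op b_op.hyps(1)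
      by simp
    then show ?thesis using b_op b_op.hyps(3) by metis
  qed
qed

lemma lstep_det: "tt L \<noteq> ff L \<Longrightarrow> lstep L a b \<Longrightarrow> lstep L a c \<Longrightarrow> b = c"
  unfolding lstep_def using rstep_det blm_no_rstep blm_det by metis

lemma plug_rstep: "\<forall>f\<in>set E. frame_ok f \<Longrightarrow> rstep L a b \<Longrightarrow> rstep L (plug E a) (plug E b)"
proof (induct E)
  case Nil then show ?case by simp
next
  case (Cons f E)
  then show ?case by (cases f) (auto intro: rstep.intros)
qed

lemma plug_blm: "\<forall>f\<in>set E. frame_ok f \<Longrightarrow> blm a l \<Longrightarrow> blm (plug E a) l"
proof (induct E)
  case Nil then show ?case by simp
next
  case (Cons f E)
  then show ?case by (cases f) (auto intro: blm.intros)
qed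

lemma plug_not_blame: "E \<noteq> [] \<Longrightarrow> plug E x \<noteq> Blame l"
  by (cases E rule: list.exhaust; cases "hd E") auto

lemma step_lstep: "step L a b \<Longrightarrow> lstep L a b"
proof (induct rule: step.induct)
  case (step_red E e1 e2)
  then show ?case unfolding lstep_def by (auto intro: plug_rstep rstep.r_red)
next
  case (step_blame E l)
  then show ?case unfolding lstep_def using plug_blm[OF step_blame(1) blm.b_base] plug_not_blame by blast
qed

lemma steps_lsteps: "steps L a b \<Longrightarrow> (lstep L)\<^sup>*\<^sup>* a b"
  by (induct rule: rtranclp_induct) (auto intro: rtranclp.rtrancl_into_rtrancl step_lstep)

primrec good_ty :: "('b,'k,'o) ty \<Rightarrow> bool" and good_tm :: "('b,'k,'o) tm \<Rightarrow> bool" where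
  "good_ty (TBase B) = True"
| "good_ty (TVar n) = True"
| "good_ty (TFun T1 T2) = (good_ty T1 \<and> good_ty T2)"
| "good_ty (TAll T) = good_ty T"
| "good_ty (TRef T e) = (good_ty T \<and> good_tm e)"
| "good_tm (Var n) = True"
| "good_tm (Const k) = True"
| "good_tm (Lam T e) = (good_ty T \<and> good_tm e)"
| "good_tm (TLam e) = good_tm e"
| "good_tm (Cast T1 T2 l) = (good_ty T1 \<and> good_ty T2)"
| "good_tm (Op p es) = list_all good_tm es"
| "good_tm (App e1 e2) = (good_tm e1 \<and> good_tm e2)"
| "good_tm (TApp e T) = (good_tm e \<and> good_ty T)"
| "good_tm (Check T e1 e2 l) = (good_ty T \<and> good_tm e1 \<and> good_tm e2)"
| "good_tm (Active T e1 e2 v l) = (good_ty T \<and> good_tm e1 \<and> good_tm e2 \<and> good_tm v \<and> is_val v)"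
| "good_tm (Blame l) = True"

lemma good_shift[simp]:
  fixes T :: "('b,'k,'o) ty" and e :: "('b,'k,'o) tm"
  shows "good_ty (shift_ty d c T) = good_ty T" and "good_tm (shift_tm d c e) = good_tm e"
  by (induct T and e arbitrary: c and c rule: ty.induct tm.induct) (auto simp: list_all_iff)

lemma good_subst:
  fixes T :: "('b,'k,'o) ty" and e :: "('b,'k,'o) tm"
  shows "good_tm s \<Longrightarrow> good_ty T \<Longrightarrow> good_ty (subst_ty k s T)"
    and "good_tm s \<Longrightarrow> good_tm e \<Longrightarrow> good_tm (subst_tm k s e)"
  by (induct T and e arbitrary: k and k rule: ty.induct tm.induct) (auto simp: is_val_subst list_all_iff)

lemma good_tsubst:
  fixes T :: "('b,'k,'o) ty" and e :: "('b,'k,'o) tm"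
  shows "good_ty S \<Longrightarrow> good_ty T \<Longrightarrow> good_ty (tsubst_ty k S T)"
    and "good_ty S \<Longrightarrow> good_tm e \<Longrightarrow> good_tm (tsubst_tm k S e)"
  by (induct T and e arbitrary: k and k rule: ty.induct tm.induct) (auto simp: is_val_tsubst list_all_iff)

lemma red_good: "red L a b \<Longrightarrow> good_tm a \<Longrightarrow> good_tm b"
  by (induct rule: red.induct) (auto simp: good_subst good_tsubst list_all_iff)

lemma wrapE: "(\<forall>f\<in>set E. frame_ok f) \<Longrightarrow> frame_ok F \<Longrightarrow> red L x y \<Longrightarrow> a = plug E x \<Longrightarrow> b = plug E y \<Longrightarrow>
  \<exists>E' x y. (\<forall>f\<in>set E'. frame_ok f) \<and> red L x y \<and> plug_frame F a = plug E' x \<and> plug_frame F b = plug E' y"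
  by (rule exI[of _ "F # E"]) auto

lemma rstep_good: "rstep L a b \<Longrightarrow> good_tm a \<Longrightarrow>
   good_tm b \<and> (\<exists>E x y. (\<forall>f\<in>set E. frame_ok f) \<and> red L x y \<and> a = plug E x \<and> b = plug E y)"
proof (induct rule: rstep.induct)
  case (r_red a b)
  then show ?case using red_good by (metis empty_iff list.set(1) plug.simps(1))
next
  case (r_appL a a' b)
  then obtain E x y where E: "(\<forall>f\<in>set E. frame_ok f)" "red L x y" "a = plug E x" "a' = plug E y" by (auto simp: list_all_iff)
  then show ?case using r_appL wrapE[OF E(1) _ E(2,3,4), of "FAppL b"] by (auto simp add: list_all_iff)
next
  case (r_appR v b b')
  then obtain E x y where E: "(\<forall>f\<in>set E. frame_ok f)" "red L x y" "b = plug E x" "b' = plug E y" by (auto simp: list_all_iff)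
  then show ?case using r_appR wrapE[OF E(1) _ E(2,3,4), of "FAppR v"] by (auto simp add: list_all_iff)
next
  case (r_tapp a a' T)
  then obtain E x y where E: "(\<forall>f\<in>set E. frame_ok f)" "red L x y" "a = plug E x" "a' = plug E y" by (auto simp: list_all_iff)
  then show ?case using r_tapp wrapE[OF E(1) _ E(2,3,4), of "FTApp T"] by (auto simp add: list_all_iff)
next
  case (r_op vs a a' p es)
  then obtain E x y where E: "(\<forall>f\<in>set E. frame_ok f)" "red L x y" "a = plug E x" "a' = plug E y" by (auto simp: list_all_iff)
  then show ?case using r_op wrapE[OF E(1) _ E(2,3,4), of "FOp p vs es"] by (auto simp add: list_all_iff)
next
  case (r_check a a' T e l)
  then obtain E x y where E: "(\<forall>f\<in>set E. frame_ok f)" "red L x y" "a = plug E x" "a' = plug E y" by (auto simp: list_all_iff)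
  then show ?case using r_check wrapE[OF E(1) _ E(2,3,4), of "FCheck T e l"] by (auto simp add: list_all_iff)
next
  case (r_act v a a' T e l)
  then obtain E x y where E: "(\<forall>f\<in>set E. frame_ok f)" "red L x y" "a = plug E x" "a' = plug E y" by (auto simp: list_all_iff)
  then show ?case using r_act wrapE[OF E(1) _ E(2,3,4), of "FActive T e v l"] by (auto simp add: list_all_iff)
next
  case (r_actv a a' T e b l)
  then show ?case using rstep_nval by auto
qed

lemma blm_good: "blm a l \<Longrightarrow> good_tm a \<Longrightarrow> \<exists>E. (\<forall>f\<in>set E. frame_ok f) \<and> a = plug E (Blame l)"
proof (induct rule: blm.induct)
  case (b_base l) then show ?case by (metis empty_iff list.set(1) plug.simps(1))
next
  case (b_appL a l b)
  then obtain E where "(\<forall>f\<in>set E. frame_ok f)" "a = plug E (Blame l)" by auto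
  then show ?case by (auto intro!: exI[of _ "FAppL b # E"])
next
  case (b_appR v b l)
  then obtain E where "(\<forall>f\<in>set E. frame_ok f)" "b = plug E (Blame l)" by auto
  then show ?case using b_appR by (auto intro!: exI[of _ "FAppR v # E"])
next
  case (b_tapp a l T)
  then obtain E where "(\<forall>f\<in>set E. frame_ok f)" "a = plug E (Blame l)" by auto
  then show ?case by (auto intro!: exI[of _ "FTApp T # E"])
next
  case (b_op vs a l p es)
  then obtain E where "(\<forall>f\<in>set E. frame_ok f)" "a = plug E (Blame l)" by auto
  then show ?case using b_op by (auto intro!: exI[of _ "FOp p vs es # E"])
next
  case (b_check a l T e l')
  then obtain E where "(\<forall>f\<in>set E. frame_ok f)" "a = plug E (Blame l)" by auto
  then show ?case by (auto intro!: exI[of _ "FCheck T e l' # E"])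
next
  case (b_act v a l T e l')
  then obtain E where "(\<forall>f\<in>set E. frame_ok f)" "a = plug E (Blame l)" by auto
  then show ?case using b_act by (auto intro!: exI[of _ "FActive T e v l' # E"])
next
  case (b_actv a l T e b l')
  then show ?case using blm_nval by auto
qed

lemma lstep_step: "good_tm a \<Longrightarrow> lstep L a b \<Longrightarrow> step L a b \<and> good_tm b"
  unfolding lstep_def
proof (elim disjE exE conjE)
  assume "good_tm a" "rstep L a b"
  then show ?thesis using rstep_good[of L a b] step.step_red by metis
next
  fix l assume g: "good_tm a" and bl: "blm a l" "a \<noteq> Blame l" "b = Blame l"
  then obtain E where E: "(\<forall>f\<in>set E. frame_ok f)" "a = plug E (Blame l)" using blm_good by metis
  then have "E \<noteq> []" using bl by auto
  then show ?thesis using E bl step.step_blame by fastforce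
qed

lemma lsteps_steps: "(lstep L)\<^sup>*\<^sup>* a b \<Longrightarrow> good_tm a \<Longrightarrow> steps L a b"
proof (induct rule: converse_rtranclp_induct)
  case base then show ?case by simp
next
  case (step y z)
  then show ?case using lstep_step by (metis converse_rtranclp_into_rtranclp)
qed

inductive_cases HtmE_App: "Htm e1 e2 n (App x y) b"
inductive_cases HtmE_TApp: "Htm e1 e2 n (TApp x T) b"
inductive_cases HtmE_Op: "Htm e1 e2 n (Op p es) b"
inductive_cases HtmE_Check: "Htm e1 e2 n (Check T x y l) b"
inductive_cases HtmE_Active: "Htm e1 e2 n (Active T x y z l) b"
inductive_cases HtmE_Lam: "Htm e1 e2 n (Lam T x) b"
inductive_cases HtmE_TLam: "Htm e1 e2 n (TLam x) b"
inductive_cases HtmE_Cast: "Htm e1 e2 n (Cast T1 T2 l) b"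
inductive_cases HtmE_Const: "Htm e1 e2 n (Const c) b"
inductive_cases HtmE_Blame: "Htm e1 e2 n (Blame l) b"
inductive_cases HtmE_App2: "Htm e1 e2 n a (App x y)"
inductive_cases HtmE_TApp2: "Htm e1 e2 n a (TApp x T)"
inductive_cases HtmE_Op2: "Htm e1 e2 n a (Op p es)"
inductive_cases HtmE_Check2: "Htm e1 e2 n a (Check T x y l)"
inductive_cases HtmE_Active2: "Htm e1 e2 n a (Active T x y z l)"
inductive_cases HtmE_Lam2: "Htm e1 e2 n a (Lam T x)"
inductive_cases HtmE_TLam2: "Htm e1 e2 n a (TLam x)"
inductive_cases HtmE_Cast2: "Htm e1 e2 n a (Cast T1 T2 l)"
inductive_cases HtmE_Const2: "Htm e1 e2 n a (Const c)"
inductive_cases HtmE_Blame2: "Htm e1 e2 n a (Blame l)"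
inductive_cases HtyE_TBase: "Hty e1 e2 n (TBase B) T"
inductive_cases HtyE_TFun: "Hty e1 e2 n (TFun A B) T"
inductive_cases HtyE_TAll: "Hty e1 e2 n (TAll A) T"
inductive_cases HtyE_TRef: "Hty e1 e2 n (TRef A e) T"
inductive_cases HtyE_TBase2: "Hty e1 e2 n T (TBase B)"
inductive_cases HtyE_TFun2: "Hty e1 e2 n T (TFun A B)"
inductive_cases HtyE_TAll2: "Hty e1 e2 n T (TAll A)"
inductive_cases HtyE_TRef2: "Hty e1 e2 n T (TRef A e)"

lemma Hty_isref: "Hty e1 e2 n T T' \<Longrightarrow> is_ref T' = is_ref T"
  by (cases rule: Hty.cases) auto

locale cotl =
  fixes L :: "('b,'k,'o,'x) fh_sig_scheme" and e1 e2 :: "('b,'k,'o) tm"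
  assumes tf: "tt L \<noteq> ff L" and st: "step L e1 e2"
begin

lemma e1_l: "lstep L e1 e2" using st by (rule step_lstep)

lemma e1_nval: "\<not> is_val e1"
  using e1_l unfolding lstep_def by (auto dest: rstep_nval blm_nval)

lemma e1_r: "\<forall>l. e2 \<noteq> Blame l \<Longrightarrow> rstep L e1 e2"
  using e1_l unfolding lstep_def by auto

lemma hole_fwd: "rstep L e1 a' \<Longrightarrow> a' = e2"
  using lstep_det[OF tf] e1_l unfolding lstep_def by metis

lemma shift_e1_nval: "\<not> is_val (shift_tm n 0 e1)"
  using e1_nval by simp

lemma shift_e1_ne[simp]: "is_val x \<Longrightarrow> (x = shift_tm n 0 e1) = False" "is_val x \<Longrightarrow> (shift_tm n 0 e1 = x) = False"
  using e1_nval by auto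

lemma H_val: "Htm e1 e2 n a b \<Longrightarrow> is_val a \<Longrightarrow> is_val b"
  by (cases rule: Htm.cases) (auto simp: e1_nval)

lemma inv_Lam: "Htm e1 e2 n (Lam T x) b \<Longrightarrow> \<exists>T' x'. b = Lam T' x' \<and> Hty e1 e2 n T T' \<and> Htm e1 e2 (Suc n) x x'"
  by (erule HtmE_Lam) auto
lemma inv_TLam: "Htm e1 e2 n (TLam x) b \<Longrightarrow> \<exists>x'. b = TLam x' \<and> Htm e1 e2 (Suc n) x x'"
  by (erule HtmE_TLam) auto
lemma inv_Cast: "Htm e1 e2 n (Cast T1 T2 l) b \<Longrightarrow> \<exists>T1' T2'. b = Cast T1' T2' l \<and> Hty e1 e2 n T1 T1' \<and> Hty e1 e2 n T2 T2'"
  by (erule HtmE_Cast) auto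
lemma inv_Const: "Htm e1 e2 n (Const c) b \<Longrightarrow> b = Const c"
  by (erule HtmE_Const) auto
lemma inv_Lam2: "Htm e1 e2 n a (Lam T x) \<Longrightarrow> is_val a \<Longrightarrow> \<exists>T' x'. a = Lam T' x' \<and> Hty e1 e2 n T' T \<and> Htm e1 e2 (Suc n) x' x"
  by (erule HtmE_Lam2) (auto simp: e1_nval)
lemma inv_TLam2: "Htm e1 e2 n a (TLam x) \<Longrightarrow> is_val a \<Longrightarrow> \<exists>x'. a = TLam x' \<and> Htm e1 e2 (Suc n) x' x"
  by (erule HtmE_TLam2) (auto simp: e1_nval)
lemma inv_Cast2: "Htm e1 e2 n a (Cast T1 T2 l) \<Longrightarrow> is_val a \<Longrightarrow> \<exists>T1' T2'. a = Cast T1' T2' l \<and> Hty e1 e2 n T1' T1 \<and> Hty e1 e2 n T2' T2"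
  by (erule HtmE_Cast2) (auto simp: e1_nval)
lemma inv_Const2: "Htm e1 e2 n a (Const c) \<Longrightarrow> is_val a \<Longrightarrow> a = Const c"
  by (erule HtmE_Const2) (auto simp: e1_nval)

lemma hole_red: "rstep L a a' \<Longrightarrow> a = e1 \<Longrightarrow> b = e2 \<Longrightarrow> \<exists>b'. (b' = b \<or> rstep L b b') \<and> Htm e1 e2 0 a' b'"
  using hole_fwd H_refl(2) by metis

lemma sh1: "Hty e1 e2 n T T' \<Longrightarrow> c \<le> n \<Longrightarrow> Hty e1 e2 (Suc n) (shift_ty 1 c T) (shift_ty 1 c T')"
  using H_shift(1)[of e1 e2 n T T' c 1] by simp
lemma sh1t: "Htm e1 e2 n T T' \<Longrightarrow> c \<le> n \<Longrightarrow> Htm e1 e2 (Suc n) (shift_tm 1 c T) (shift_tm 1 c T')"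
  using H_shift(2)[of e1 e2 n T T' c 1] by simp
lemma sh2t: "Htm e1 e2 0 T T' \<Longrightarrow> Htm e1 e2 (Suc (Suc 0)) (shift_tm 2 0 T) (shift_tm 2 0 T')"
  using H_shift(2)[of e1 e2 0 T T' 0 2] by (simp add: numeral_eq_Suc)

lemma red_fwd: assumes rd: "red L a a'" and h: "Htm e1 e2 0 a b"
  shows "\<exists>b'. (b' = b \<or> rstep L b b') \<and> Htm e1 e2 0 a' b'"
  using rd
proof cases
  case (red_op p ks k)
  from h[unfolded red_op] show ?thesis
  proof (rule HtmE_Op)
    show "Op p (map Const ks) = shift_tm 0 0 e1 \<Longrightarrow> b = shift_tm 0 0 e2 \<Longrightarrow> ?thesis"
      using hole_red[OF r_red[OF rd]] red_op by (simp add: shift_0)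
  next
    fix es' assume b: "b = Op p es'" "list_all2 (Htm e1 e2 0) (map Const ks) es'"
    have "es' = map Const ks" using b(2)
      by (induct ks arbitrary: es') (auto simp: list_all2_Cons1 dest: inv_Const)
    then show ?thesis using b red_op rstep.r_red[OF rd] H_refl(2) by metis
  qed
next
  case (red_beta v T e)
  from h[unfolded red_beta] show ?thesis
  proof (rule HtmE_App)
    show "App (Lam T e) v = shift_tm 0 0 e1 \<Longrightarrow> b = shift_tm 0 0 e2 \<Longrightarrow> ?thesis"
      using hole_red[OF r_red[OF rd]] red_beta by (simp add: shift_0)
  next
    fix x' y' assume b: "b = App x' y'" "Htm e1 e2 0 (Lam T e) x'" "Htm e1 e2 0 v y'"
    obtain T' e' where x': "x' = Lam T' e'" "Htm e1 e2 (Suc 0) e e'" using inv_Lam[OF b(2)] by metis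
    have "is_val y'" using H_val b(3) red_beta by metis
    then have "rstep L b (subst_tm 0 y' e')" using b x' by (auto intro: rstep.r_red red.intros)
    moreover have "Htm e1 e2 0 a' (subst_tm 0 y' e')" using H_subst(2)[OF x'(2) refl b(3)] red_beta by simp
    ultimately show ?thesis by metis
  qed
next
  case (red_tbeta e T)
  from h[unfolded red_tbeta] show ?thesis
  proof (rule HtmE_TApp)
    show "TApp (TLam e) T = shift_tm 0 0 e1 \<Longrightarrow> b = shift_tm 0 0 e2 \<Longrightarrow> ?thesis"
      using hole_red[OF r_red[OF rd]] red_tbeta by (simp add: shift_0)
  next
    fix x' T' assume b: "b = TApp x' T'" "Htm e1 e2 0 (TLam e) x'" "Hty e1 e2 0 T T'"
    obtain e' where x': "x' = TLam e'" "Htm e1 e2 (Suc 0) e e'" using inv_TLam[OF b(2)] by metis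
    have "rstep L b (tsubst_tm 0 T' e')" using b x' by (auto intro: rstep.r_red red.intros)
    moreover have "Htm e1 e2 0 a' (tsubst_tm 0 T' e')" using H_tsubst(2)[OF x'(2) refl b(3)] red_tbeta by simp
    ultimately show ?thesis by metis
  qed
next
  case (red_base B l)
  from h[unfolded red_base] show ?thesis
  proof (rule HtmE_App)
    show "App (Cast (TBase B) (TBase B) l) a' = shift_tm 0 0 e1 \<Longrightarrow> b = shift_tm 0 0 e2 \<Longrightarrow> ?thesis"
      using hole_red[OF r_red[OF rd]] red_base by (simp add: shift_0)
  next
    fix x' y' assume b: "b = App x' y'" "Htm e1 e2 0 (Cast (TBase B) (TBase B) l) x'" "Htm e1 e2 0 a' y'"
    obtain T1 T2 where x': "x' = Cast T1 T2 l" "Hty e1 e2 0 (TBase B) T1" "Hty e1 e2 0 (TBase B) T2"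
      using inv_Cast[OF b(2)] by metis
    have "T1 = TBase B" "T2 = TBase B" using x' by (auto elim: HtyE_TBase)
    moreover have "is_val y'" using H_val b(3) red_base by metis
    ultimately have "rstep L b y'" using b x' by (auto intro: rstep.r_red red.intros)
    then show ?thesis using b red_base by metis
  qed
next
  case (red_fun v T11 T12 T21 T22 l)
  from h[unfolded red_fun] show ?thesis
  proof (rule HtmE_App)
    show "App (Cast (TFun T11 T12) (TFun T21 T22) l) v = shift_tm 0 0 e1 \<Longrightarrow> b = shift_tm 0 0 e2 \<Longrightarrow> ?thesis"
      using hole_red[OF r_red[OF rd]] red_fun by (simp add: shift_0)
  next
    fix x' y' assume b: "b = App x' y'" "Htm e1 e2 0 (Cast (TFun T11 T12) (TFun T21 T22) l) x'" "Htm e1 e2 0 v y'"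
    obtain S1 S2 where x': "x' = Cast S1 S2 l" "Hty e1 e2 0 (TFun T11 T12) S1" "Hty e1 e2 0 (TFun T21 T22) S2"
      using inv_Cast[OF b(2)] by metis
    obtain U11 U12 where u1: "S1 = TFun U11 U12" "Hty e1 e2 0 T11 U11" "Hty e1 e2 (Suc 0) T12 U12"
      using x'(2) by (auto elim: HtyE_TFun)
    obtain U21 U22 where u2: "S2 = TFun U21 U22" "Hty e1 e2 0 T21 U21" "Hty e1 e2 (Suc 0) T22 U22"
      using x'(3) by (auto elim: HtyE_TFun)
    have "is_val y'" using H_val b(3) red_fun by metis
    then have "rstep L b (Lam U21
        (App (Lam (shift_ty 1 0 U11)
                (App (Cast (shift_ty 1 1 U12) (shift_ty 1 0 U22) l)
                     (App (shift_tm 2 0 y') (Var 0))))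
             (App (Cast (shift_ty 1 0 U21) (shift_ty 1 0 U11) l) (Var 0))))"
      using rstep.r_red[OF red.red_fun[OF \<open>is_val y'\<close>, of L U11 U12 U21 U22 l]] b x' u1 u2 by simp
    moreover have "Htm e1 e2 0 a' (Lam U21
        (App (Lam (shift_ty 1 0 U11)
                (App (Cast (shift_ty 1 1 U12) (shift_ty 1 0 U22) l)
                     (App (shift_tm 2 0 y') (Var 0))))
             (App (Cast (shift_ty 1 0 U21) (shift_ty 1 0 U11) l) (Var 0))))"
      unfolding red_fun
      by (intro Hty_Htm.intros u1 u2 sh1 sh2t b(3); simp)
    ultimately show ?thesis by metis
  qed
next
  case (red_forall v T1 T2 l)
  from h[unfolded red_forall] show ?thesis
  proof (rule HtmE_App)
    show "App (Cast (TAll T1) (TAll T2) l) v = shift_tm 0 0 e1 \<Longrightarrow> b = shift_tm 0 0 e2 \<Longrightarrow> ?thesis"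
      using hole_red[OF r_red[OF rd]] red_forall by (simp add: shift_0)
  next
    fix x' y' assume b: "b = App x' y'" "Htm e1 e2 0 (Cast (TAll T1) (TAll T2) l) x'" "Htm e1 e2 0 v y'"
    obtain S1 S2 where x': "x' = Cast S1 S2 l" "Hty e1 e2 0 (TAll T1) S1" "Hty e1 e2 0 (TAll T2) S2"
      using inv_Cast[OF b(2)] by metis
    obtain U1 where u1: "S1 = TAll U1" "Hty e1 e2 (Suc 0) T1 U1"
      using x'(2) by (auto elim: HtyE_TAll)
    obtain U2 where u2: "S2 = TAll U2" "Hty e1 e2 (Suc 0) T2 U2"
      using x'(3) by (auto elim: HtyE_TAll)
    have "is_val y'" using H_val b(3) red_forall by metis
    then have "rstep L b (TLam (App (Cast U1 U2 l) (TApp (shift_tm 1 0 y') (TVar 0))))"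
      using rstep.r_red[OF red.red_forall[OF \<open>is_val y'\<close>, of L U1 U2 l]] b x' u1 u2 by simp
    moreover have "Htm e1 e2 0 a' (TLam (App (Cast U1 U2 l) (TApp (shift_tm 1 0 y') (TVar 0))))"
      unfolding red_forall
      by (intro Hty_Htm.intros u1 u2 sh1t b(3); simp)
    ultimately show ?thesis by metis
  qed
next
  case (red_forget v T1 e T2 l)
  from h[unfolded red_forget] show ?thesis
  proof (rule HtmE_App)
    show "App (Cast (TRef T1 e) T2 l) v = shift_tm 0 0 e1 \<Longrightarrow> b = shift_tm 0 0 e2 \<Longrightarrow> ?thesis"
      using hole_red[OF r_red[OF rd]] red_forget by (simp add: shift_0)
  next
    fix x' y' assume b: "b = App x' y'" "Htm e1 e2 0 (Cast (TRef T1 e) T2 l) x'" "Htm e1 e2 0 v y'"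
    obtain S1 S2 where x': "x' = Cast S1 S2 l" "Hty e1 e2 0 (TRef T1 e) S1" "Hty e1 e2 0 T2 S2"
      using inv_Cast[OF b(2)] by metis
    obtain U1 f where u1: "S1 = TRef U1 f" "Hty e1 e2 0 T1 U1"
      using x'(2) by (auto elim: HtyE_TRef)
    have "is_val y'" using H_val b(3) red_forget by metis
    then have "rstep L b (App (Cast U1 S2 l) y')"
      using b x' u1 by (auto intro: rstep.r_red red.intros)
    moreover have "Htm e1 e2 0 a' (App (Cast U1 S2 l) y')"
      unfolding red_forget
      by (intro Hty_Htm.intros u1 x' b(3))
    ultimately show ?thesis by metis
  qed
next
  case (red_precheck v T1 T2 e l)
  from h[unfolded red_precheck] show ?thesis
  proof (rule HtmE_App)
    show "App (Cast T1 (TRef T2 e) l) v = shift_tm 0 0 e1 \<Longrightarrow> b = shift_tm 0 0 e2 \<Longrightarrow> ?thesis"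
      using hole_red[OF r_red[OF rd]] red_precheck by (simp add: shift_0)
  next
    fix x' y' assume b: "b = App x' y'" "Htm e1 e2 0 (Cast T1 (TRef T2 e) l) x'" "Htm e1 e2 0 v y'"
    obtain S1 S2 where x': "x' = Cast S1 S2 l" "Hty e1 e2 0 T1 S1" "Hty e1 e2 0 (TRef T2 e) S2"
      using inv_Cast[OF b(2)] by metis
    obtain U2 f where u2: "S2 = TRef U2 f" "Hty e1 e2 0 T2 U2" "Htm e1 e2 (Suc 0) e f"
      using x'(3) by (auto elim: HtyE_TRef)
    have "is_val y'" using H_val b(3) red_precheck by metis
    moreover have "\<not> is_ref S1" using Hty_isref[OF x'(2)] red_precheck by simp
    ultimately have "rstep L b (Check U2 f (App (Cast S1 U2 l) y') l)"
      using b x' u2 by (auto intro: rstep.r_red red.intros)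
    moreover have "Htm e1 e2 0 a' (Check U2 f (App (Cast S1 U2 l) y') l)"
      unfolding red_precheck
      by (intro Hty_Htm.intros u2 x' b(3))
    ultimately show ?thesis by metis
  qed
next
  case (red_check v T e l)
  from h[unfolded red_check] show ?thesis
  proof (rule HtmE_Check)
    show "Check T e v l = shift_tm 0 0 e1 \<Longrightarrow> b = shift_tm 0 0 e2 \<Longrightarrow> ?thesis"
      using hole_red[OF r_red[OF rd]] red_check by (simp add: shift_0)
  next
    fix T' e' v' assume b: "b = Check T' e' v' l" "Hty e1 e2 0 T T'" "Htm e1 e2 (Suc 0) e e'" "Htm e1 e2 0 v v'"
    have "is_val v'" using H_val b(4) red_check by metis
    then have "rstep L b (Active T' e' (subst_tm 0 v' e') v' l)"
      using b by (auto intro: rstep.r_red red.intros)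
    moreover have "Htm e1 e2 0 a' (Active T' e' (subst_tm 0 v' e') v' l)"
      unfolding red_check
      by (intro Hty_Htm.intros b H_subst(2)[OF b(3) refl b(4)])
    ultimately show ?thesis by metis
  qed
next
  case (red_ok T e l)
  from h[unfolded red_ok] show ?thesis
  proof (rule HtmE_Active)
    show "Active T e (Const (tt L)) a' l = shift_tm 0 0 e1 \<Longrightarrow> b = shift_tm 0 0 e2 \<Longrightarrow> ?thesis"
      using hole_red[OF r_red[OF rd]] red_ok by (simp add: shift_0)
  next
    fix T' e' c' a'' assume b: "b = Active T' e' c' a'' l" "Hty e1 e2 0 T T'" "Htm e1 e2 (Suc 0) e e'"
      "Htm e1 e2 0 (Const (tt L)) c'" "Htm e1 e2 0 a' a''"
    have "is_val a''" using H_val b(5) red_ok by metis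
    moreover have "c' = Const (tt L)" using inv_Const b(4) by metis
    ultimately have "rstep L b a''" using b by (auto intro: rstep.r_red red.intros)
    then show ?thesis using b red_ok H_refl(2) by metis
  qed
next
  case (red_fail v T e l)
  from h[unfolded red_fail] show ?thesis
  proof (rule HtmE_Active)
    show "Active T e (Const (ff L)) v l = shift_tm 0 0 e1 \<Longrightarrow> b = shift_tm 0 0 e2 \<Longrightarrow> ?thesis"
      using hole_red[OF r_red[OF rd]] red_fail by (simp add: shift_0)
  next
    fix T' e' c' v' assume b: "b = Active T' e' c' v' l" "Hty e1 e2 0 T T'" "Htm e1 e2 (Suc 0) e e'"
      "Htm e1 e2 0 (Const (ff L)) c'" "Htm e1 e2 0 v v'"
    have "is_val v'" using H_val b(5) red_fail by metis
    moreover have "c' = Const (ff L)" using inv_Const b(4) by metis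
    ultimately have "rstep L b (Blame l)" using b by (auto intro: rstep.r_red red.intros)
    then show ?thesis using b red_fail Hty_Htm.HBlame by metis
  qed
qed

lemma hole_case: "rstep L a a' \<Longrightarrow> a = shift_tm 0 0 e1 \<Longrightarrow> b = shift_tm 0 0 e2 \<Longrightarrow> \<exists>b'. (b' = b \<or> rstep L b b') \<and> Htm e1 e2 0 a' b'"
  using hole_red by (simp add: shift_0)

lemma sim_fwd: "rstep L a a' \<Longrightarrow> Htm e1 e2 0 a b \<Longrightarrow> \<exists>b'. (b' = b \<or> rstep L b b') \<and> Htm e1 e2 0 a' b'"
proof (induct arbitrary: b rule: rstep.induct)
  case (r_red a a')
  then show ?case using red_fwd by metis
next
  case (r_appL x x' y)
  from r_appL(3) show ?case
  proof (rule HtmE_App)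
    show "App x y = shift_tm 0 0 e1 \<Longrightarrow> b = shift_tm 0 0 e2 \<Longrightarrow> ?thesis"
      using hole_case rstep.r_appL[OF r_appL(1)] by metis
  next
    fix bx yb assume b: "b = App bx yb" "Htm e1 e2 0 x bx" "Htm e1 e2 0 y yb"
    then obtain bx' where "(bx' = bx \<or> rstep L bx bx') \<and> Htm e1 e2 0 x' bx'" using r_appL(2) by metis
    then show ?thesis using b by (metis rstep.r_appL Hty_Htm.HApp)
  qed
next
  case (r_appR v y y')
  from r_appR(4) show ?case
  proof (rule HtmE_App)
    show "App v y = shift_tm 0 0 e1 \<Longrightarrow> b = shift_tm 0 0 e2 \<Longrightarrow> ?thesis"
      using hole_case rstep.r_appR[OF r_appR(1,2)] by metis
  next
    fix bx yb assume b: "b = App bx yb" "Htm e1 e2 0 v bx" "Htm e1 e2 0 y yb"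
    have "is_val bx" using H_val b(2) r_appR(1) by metis
    obtain yb' where "(yb' = yb \<or> rstep L yb yb') \<and> Htm e1 e2 0 y' yb'" using r_appR(3) b by metis
    then show ?thesis using b \<open>is_val bx\<close> by (metis rstep.r_appR Hty_Htm.HApp)
  qed
next
  case (r_tapp x x' T)
  from r_tapp(3) show ?case
  proof (rule HtmE_TApp)
    show "TApp x T = shift_tm 0 0 e1 \<Longrightarrow> b = shift_tm 0 0 e2 \<Longrightarrow> ?thesis"
      using hole_case rstep.r_tapp[OF r_tapp(1)] by metis
  next
    fix bx T' assume b: "b = TApp bx T'" "Htm e1 e2 0 x bx" "Hty e1 e2 0 T T'"
    then obtain bx' where "(bx' = bx \<or> rstep L bx bx') \<and> Htm e1 e2 0 x' bx'" using r_tapp(2) by metis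
    then show ?thesis using b by (metis rstep.r_tapp Hty_Htm.HTApp)
  qed
next
  case (r_check x x' T e l)
  from r_check(3) show ?case
  proof (rule HtmE_Check)
    show "Check T e x l = shift_tm 0 0 e1 \<Longrightarrow> b = shift_tm 0 0 e2 \<Longrightarrow> ?thesis"
      using hole_case rstep.r_check[OF r_check(1)] by metis
  next
    fix T' e' bx assume b: "b = Check T' e' bx l" "Hty e1 e2 0 T T'" "Htm e1 e2 (Suc 0) e e'" "Htm e1 e2 0 x bx"
    then obtain bx' where "(bx' = bx \<or> rstep L bx bx') \<and> Htm e1 e2 0 x' bx'" using r_check(2) by metis
    then show ?thesis using b by (metis rstep.r_check Hty_Htm.HCheck)
  qed
next
  case (r_act v x x' T e l)
  from r_act(4) show ?case
  proof (rule HtmE_Active)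
    show "Active T e x v l = shift_tm 0 0 e1 \<Longrightarrow> b = shift_tm 0 0 e2 \<Longrightarrow> ?thesis"
      using hole_case rstep.r_act[OF r_act(1,2)] by metis
  next
    fix T' e' bx bv assume b: "b = Active T' e' bx bv l" "Hty e1 e2 0 T T'" "Htm e1 e2 (Suc 0) e e'"
      "Htm e1 e2 0 x bx" "Htm e1 e2 0 v bv"
    have "is_val bv" using H_val b(5) r_act(1) by metis
    obtain bx' where "(bx' = bx \<or> rstep L bx bx') \<and> Htm e1 e2 0 x' bx'" using r_act(3) b by metis
    then show ?thesis using b \<open>is_val bv\<close> by (metis rstep.r_act Hty_Htm.HActive)
  qed
next
  case (r_actv x x' T e c l)
  from r_actv(3) show ?case
  proof (rule HtmE_Active)
    show "Active T e c x l = shift_tm 0 0 e1 \<Longrightarrow> b = shift_tm 0 0 e2 \<Longrightarrow> ?thesis"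
      using hole_case rstep.r_actv[OF r_actv(1)] by metis
  next
    fix T' e' bc bx assume b: "b = Active T' e' bc bx l" "Hty e1 e2 0 T T'" "Htm e1 e2 (Suc 0) e e'"
      "Htm e1 e2 0 c bc" "Htm e1 e2 0 x bx"
    obtain bx' where "(bx' = bx \<or> rstep L bx bx') \<and> Htm e1 e2 0 x' bx'" using r_actv(2) b by metis
    then show ?thesis using b by (metis rstep.r_actv Hty_Htm.HActive)
  qed
next
  case (r_op vs x x' p es)
  from r_op(4) show ?case
  proof (rule HtmE_Op)
    show "Op p (vs @ x # es) = shift_tm 0 0 e1 \<Longrightarrow> b = shift_tm 0 0 e2 \<Longrightarrow> ?thesis"
      using hole_case rstep.r_op[OF r_op(1,2)] by metis
  next
    fix bs assume b: "b = Op p bs" "list_all2 (Htm e1 e2 0) (vs @ x # es) bs"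
    then obtain bvs bx bes where bs: "bs = bvs @ bx # bes" "list_all2 (Htm e1 e2 0) vs bvs"
      "Htm e1 e2 0 x bx" "list_all2 (Htm e1 e2 0) es bes"
      by (auto simp: list_all2_append1 list_all2_Cons1)
    have "\<forall>v\<in>set bvs. is_val v" using bs(2) r_op(1)
      by (induct vs bvs rule: list_all2_induct) (auto dest: H_val)
    moreover obtain bx' where "(bx' = bx \<or> rstep L bx bx') \<and> Htm e1 e2 0 x' bx'" using r_op(3) bs by metis
    ultimately show ?thesis using b bs
      by (metis rstep.r_op Hty_Htm.HOp list_all2_appendI list_all2_Cons)
  qed
qed

lemma rtranclp_lift: assumes "\<And>x y. rstep L x y \<Longrightarrow> rstep L (f x) (f y)"
  shows "(rstep L)\<^sup>*\<^sup>* a b \<Longrightarrow> (rstep L)\<^sup>*\<^sup>* (f a) (f b)"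
  by (induct rule: rtranclp_induct) (auto intro: rtranclp.rtrancl_into_rtrancl assms)

lemma H_val2: "Htm e1 e2 n a b \<Longrightarrow> is_val b \<Longrightarrow> is_val a \<or> (a = shift_tm n 0 e1 \<and> b = shift_tm n 0 e2)"
  by (cases rule: Htm.cases) auto

lemma rstep_e1_e2: "rstep L e2 x \<Longrightarrow> rstep L e1 e2"
  using e1_r blame_no_rstep by metis

lemma val_bwd: "Htm e1 e2 0 a b \<Longrightarrow> is_val b \<Longrightarrow> \<exists>a'. (rstep L)\<^sup>*\<^sup>* a a' \<and> is_val a' \<and> Htm e1 e2 0 a' b"
proof -
  assume h: "Htm e1 e2 0 a b" and v: "is_val b"
  from H_val2[OF h v] show ?thesis
  proof
    assume "is_val a" then show ?thesis using h by blast
  next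
    assume "a = shift_tm 0 0 e1 \<and> b = shift_tm 0 0 e2"
    then have ab: "a = e1" "b = e2" by (auto simp: shift_0)
    have "\<forall>l. e2 \<noteq> Blame l" using v ab by auto
    then have "rstep L e1 e2" by (rule e1_r)
    then show ?thesis using ab v H_refl(2) by blast
  qed
qed

lemma hole_bwd: "a = shift_tm 0 0 e1 \<Longrightarrow> b = shift_tm 0 0 e2 \<Longrightarrow> rstep L b b' \<Longrightarrow> \<exists>a'. (rstep L)\<^sup>*\<^sup>* a a' \<and> Htm e1 e2 0 a' b'"
proof -
  assume "a = shift_tm 0 0 e1" "b = shift_tm 0 0 e2" "rstep L b b'"
  then have "a = e1" "b = e2" "rstep L e2 b'" by (auto simp: shift_0)
  then have "(rstep L)\<^sup>*\<^sup>* a b'" using rstep_e1_e2 by (metis r_into_rtranclp rtranclp.rtrancl_into_rtrancl)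
  moreover have "Htm e1 e2 0 b' b'" by (rule H_refl(2))
  ultimately show ?thesis by blast
qed

lemma ops_bwd: "list_all2 (Htm e1 e2 0) as bs \<Longrightarrow> \<forall>v\<in>set bs. is_val v \<Longrightarrow> \<forall>v\<in>set vs. is_val v \<Longrightarrow>
  \<exists>as'. (rstep L)\<^sup>*\<^sup>* (Op p (vs @ as @ es)) (Op p (vs @ as' @ es)) \<and> (\<forall>v\<in>set as'. is_val v) \<and> list_all2 (Htm e1 e2 0) as' bs"
proof (induct as bs arbitrary: vs rule: list_all2_induct)
  case Nil then show ?case by auto
next
  case (Cons x xs y ys)
  obtain x' where x': "(rstep L)\<^sup>*\<^sup>* x x'" "is_val x'" "Htm e1 e2 0 x' y" using val_bwd[of x y] Cons(1) Cons(4) by auto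
  have s1: "(rstep L)\<^sup>*\<^sup>* (Op p (vs @ (x # xs) @ es)) (Op p (vs @ (x' # xs) @ es))"
    using rtranclp_lift[of "\<lambda>z. Op p (vs @ z # xs @ es)", OF _ x'(1)] Cons(5) by (auto intro: rstep.r_op)
  obtain xs' where xs': "(rstep L)\<^sup>*\<^sup>* (Op p ((vs @ [x']) @ xs @ es)) (Op p ((vs @ [x']) @ xs' @ es))"
    "\<forall>v\<in>set xs'. is_val v" "list_all2 (Htm e1 e2 0) xs' ys"
    using Cons(3)[of "vs @ [x']"] Cons(4,5) x'(2) by auto
  show ?case
    by (rule exI[of _ "x' # xs'"]) (use s1 xs' x' in auto)
qed

lemma app_bwd: "(rstep L)\<^sup>*\<^sup>* x x' \<Longrightarrow> is_val x' \<Longrightarrow> (rstep L)\<^sup>*\<^sup>* y y' \<Longrightarrow> (rstep L)\<^sup>*\<^sup>* (App x y) (App x' y')"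
proof -
  assume a: "(rstep L)\<^sup>*\<^sup>* x x'" "is_val x'" "(rstep L)\<^sup>*\<^sup>* y y'"
  have "(rstep L)\<^sup>*\<^sup>* (App x y) (App x' y)" using rtranclp_lift[of "\<lambda>z. App z y", OF _ a(1)] by (auto intro: rstep.r_appL)
  moreover have "(rstep L)\<^sup>*\<^sup>* (App x' y) (App x' y')" using rtranclp_lift[of "\<lambda>z. App x' z", OF _ a(3)] a(2) by (auto intro: rstep.r_appR)
  ultimately show ?thesis by simp
qed

lemma tapp_bwd: "(rstep L)\<^sup>*\<^sup>* x x' \<Longrightarrow> (rstep L)\<^sup>*\<^sup>* (TApp x T) (TApp x' T)"
  using rtranclp_lift[of "\<lambda>z. TApp z T"] by (auto intro: rstep.r_tapp)

lemma check_bwd: "(rstep L)\<^sup>*\<^sup>* x x' \<Longrightarrow> (rstep L)\<^sup>*\<^sup>* (Check T e x l) (Check T e x' l)"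
  using rtranclp_lift[of "\<lambda>z. Check T e z l"] by (auto intro: rstep.r_check)

lemma act_bwd: "(rstep L)\<^sup>*\<^sup>* v v' \<Longrightarrow> is_val v' \<Longrightarrow> (rstep L)\<^sup>*\<^sup>* c c' \<Longrightarrow> (rstep L)\<^sup>*\<^sup>* (Active T e c v l) (Active T e c' v' l)"
proof -
  assume a: "(rstep L)\<^sup>*\<^sup>* v v'" "is_val v'" "(rstep L)\<^sup>*\<^sup>* c c'"
  have "(rstep L)\<^sup>*\<^sup>* (Active T e c v l) (Active T e c v' l)" using rtranclp_lift[of "\<lambda>z. Active T e c z l", OF _ a(1)] by (auto intro: rstep.r_actv)
  moreover have "(rstep L)\<^sup>*\<^sup>* (Active T e c v' l) (Active T e c' v' l)" using rtranclp_lift[of "\<lambda>z. Active T e z v' l", OF _ a(3)] a(2) by (auto intro: rstep.r_act)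
  ultimately show ?thesis by simp
qed

lemma consts_eq: "list_all2 (Htm e1 e2 0) as (map Const ks) \<Longrightarrow> \<forall>v\<in>set as. is_val v \<Longrightarrow> as = map Const ks"
  by (induct ks arbitrary: as) (auto simp: list_all2_Cons2 dest: inv_Const2)

lemma red_bwd: assumes rd: "red L b b'" and h: "Htm e1 e2 0 a b"
  shows "\<exists>a'. (rstep L)\<^sup>*\<^sup>* a a' \<and> Htm e1 e2 0 a' b'"
  using rd
proof cases
  case (red_op p ks k)
  from h[unfolded red_op] show ?thesis
  proof (rule HtmE_Op2)
    show "a = shift_tm 0 0 e1 \<Longrightarrow> Op p (map Const ks) = shift_tm 0 0 e2 \<Longrightarrow> ?thesis"
      using hole_bwd rstep.r_red[OF rd] red_op by metis
  next
    fix as assume a: "a = Op p as" "list_all2 (Htm e1 e2 0) as (map Const ks)"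
    obtain as' where as': "(rstep L)\<^sup>*\<^sup>* (Op p ([] @ as @ [])) (Op p ([] @ as' @ []))" "\<forall>v\<in>set as'. is_val v"
      "list_all2 (Htm e1 e2 0) as' (map Const ks)"
      using ops_bwd[OF a(2), of "[]" p "[]"] by auto
    have "as' = map Const ks" using consts_eq as' by metis
    then have "(rstep L)\<^sup>*\<^sup>* a b'" using as'(1) a(1) rstep.r_red[OF rd] red_op
      by (simp add: rtranclp.rtrancl_into_rtrancl)
    then show ?thesis using H_refl(2) by blast
  qed
next
  case (red_beta v T e)
  from h[unfolded red_beta] show ?thesis
  proof (rule HtmE_App2)
    show "a = shift_tm 0 0 e1 \<Longrightarrow> App (Lam T e) v = shift_tm 0 0 e2 \<Longrightarrow> ?thesis"
      using hole_bwd rstep.r_red[OF rd] red_beta by metis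
  next
    fix x y assume a: "a = App x y" "Htm e1 e2 0 x (Lam T e)" "Htm e1 e2 0 y v"
    obtain x' where x': "(rstep L)\<^sup>*\<^sup>* x x'" "is_val x'" "Htm e1 e2 0 x' (Lam T e)" using val_bwd a(2) by force
    obtain T' e' where x'': "x' = Lam T' e'" "Htm e1 e2 (Suc 0) e' e" using inv_Lam2[OF x'(3,2)] by metis
    obtain y' where y': "(rstep L)\<^sup>*\<^sup>* y y'" "is_val y'" "Htm e1 e2 0 y' v" using val_bwd a(3) red_beta by force
    have "(rstep L)\<^sup>*\<^sup>* a (subst_tm 0 y' e')"
      using app_bwd[OF x'(1,2) y'(1)] x'' y'(2) a(1) by (metis rstep.r_red red.red_beta rtranclp.rtrancl_into_rtrancl)
    moreover have "Htm e1 e2 0 (subst_tm 0 y' e') b'" using H_subst(2)[OF x''(2) refl y'(3)] red_beta by simp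
    ultimately show ?thesis by blast
  qed
next
  case (red_tbeta e T)
  from h[unfolded red_tbeta] show ?thesis
  proof (rule HtmE_TApp2)
    show "a = shift_tm 0 0 e1 \<Longrightarrow> TApp (TLam e) T = shift_tm 0 0 e2 \<Longrightarrow> ?thesis"
      using hole_bwd rstep.r_red[OF rd] red_tbeta by metis
  next
    fix x T' assume a: "a = TApp x T'" "Htm e1 e2 0 x (TLam e)" "Hty e1 e2 0 T' T"
    obtain x' where x': "(rstep L)\<^sup>*\<^sup>* x x'" "is_val x'" "Htm e1 e2 0 x' (TLam e)" using val_bwd a(2) by force
    obtain e' where x'': "x' = TLam e'" "Htm e1 e2 (Suc 0) e' e" using inv_TLam2[OF x'(3,2)] by metis
    have "(rstep L)\<^sup>*\<^sup>* a (tsubst_tm 0 T' e')"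
      using tapp_bwd[OF x'(1)] x'' a(1) by (metis rstep.r_red red.red_tbeta rtranclp.rtrancl_into_rtrancl)
    moreover have "Htm e1 e2 0 (tsubst_tm 0 T' e') b'" using H_tsubst(2)[OF x''(2) refl a(3)] red_tbeta by simp
    ultimately show ?thesis by blast
  qed
next
  case (red_base B l)
  from h[unfolded red_base] show ?thesis
  proof (rule HtmE_App2)
    show "a = shift_tm 0 0 e1 \<Longrightarrow> App (Cast (TBase B) (TBase B) l) b' = shift_tm 0 0 e2 \<Longrightarrow> ?thesis"
      using hole_bwd rstep.r_red[OF rd] red_base by metis
  next
    fix x y assume a: "a = App x y" "Htm e1 e2 0 x (Cast (TBase B) (TBase B) l)" "Htm e1 e2 0 y b'"
    obtain x' where x': "(rstep L)\<^sup>*\<^sup>* x x'" "is_val x'" "Htm e1 e2 0 x' (Cast (TBase B) (TBase B) l)" using val_bwd a(2) by force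
    obtain S1 S2 where x'': "x' = Cast S1 S2 l" "Hty e1 e2 0 S1 (TBase B)" "Hty e1 e2 0 S2 (TBase B)" using inv_Cast2[OF x'(3,2)] by metis
    have S: "S1 = TBase B" "S2 = TBase B" using x'' by (auto elim: HtyE_TBase2)
    obtain y' where y': "(rstep L)\<^sup>*\<^sup>* y y'" "is_val y'" "Htm e1 e2 0 y' b'" using val_bwd a(3) red_base by force
    have "(rstep L)\<^sup>*\<^sup>* a y'"
      using app_bwd[OF x'(1,2) y'(1)] x'' S y'(2) a(1) by (metis rstep.r_red red.red_base rtranclp.rtrancl_into_rtrancl)
    then show ?thesis using y'(3) by blast
  qed
next
  case (red_fun v T11 T12 T21 T22 l)
  from h[unfolded red_fun] show ?thesis
  proof (rule HtmE_App2)
    show "a = shift_tm 0 0 e1 \<Longrightarrow> App (Cast (TFun T11 T12) (TFun T21 T22) l) v = shift_tm 0 0 e2 \<Longrightarrow> ?thesis"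
      using hole_bwd rstep.r_red[OF rd] red_fun by metis
  next
    fix x y assume a: "a = App x y" "Htm e1 e2 0 x (Cast (TFun T11 T12) (TFun T21 T22) l)" "Htm e1 e2 0 y v"
    obtain x' where x': "(rstep L)\<^sup>*\<^sup>* x x'" "is_val x'" "Htm e1 e2 0 x' (Cast (TFun T11 T12) (TFun T21 T22) l)" using val_bwd a(2) by force
    obtain S1 S2 where x'': "x' = Cast S1 S2 l" "Hty e1 e2 0 S1 (TFun T11 T12)" "Hty e1 e2 0 S2 (TFun T21 T22)" using inv_Cast2[OF x'(3,2)] by metis
    obtain U11 U12 where u1: "S1 = TFun U11 U12" "Hty e1 e2 0 U11 T11" "Hty e1 e2 (Suc 0) U12 T12"
      using x''(2) by (auto elim: HtyE_TFun2)
    obtain U21 U22 where u2: "S2 = TFun U21 U22" "Hty e1 e2 0 U21 T21" "Hty e1 e2 (Suc 0) U22 T22"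
      using x''(3) by (auto elim: HtyE_TFun2)
    obtain y' where y': "(rstep L)\<^sup>*\<^sup>* y y'" "is_val y'" "Htm e1 e2 0 y' v" using val_bwd a(3) red_fun by force
    have st: "rstep L (App x' y') (Lam U21
        (App (Lam (shift_ty 1 0 U11)
                (App (Cast (shift_ty 1 1 U12) (shift_ty 1 0 U22) l)
                     (App (shift_tm 2 0 y') (Var 0))))
             (App (Cast (shift_ty 1 0 U21) (shift_ty 1 0 U11) l) (Var 0))))"
      using rstep.r_red[OF red.red_fun[OF y'(2), of L U11 U12 U21 U22 l]] x'' u1 u2 by simp
    have "(rstep L)\<^sup>*\<^sup>* a (Lam U21
        (App (Lam (shift_ty 1 0 U11)
                (App (Cast (shift_ty 1 1 U12) (shift_ty 1 0 U22) l)
                     (App (shift_tm 2 0 y') (Var 0))))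
             (App (Cast (shift_ty 1 0 U21) (shift_ty 1 0 U11) l) (Var 0))))"
      using app_bwd[OF x'(1,2) y'(1)] st a(1) by (metis rtranclp.rtrancl_into_rtrancl)
    moreover have "Htm e1 e2 0 (Lam U21
        (App (Lam (shift_ty 1 0 U11)
                (App (Cast (shift_ty 1 1 U12) (shift_ty 1 0 U22) l)
                     (App (shift_tm 2 0 y') (Var 0))))
             (App (Cast (shift_ty 1 0 U21) (shift_ty 1 0 U11) l) (Var 0)))) b'"
      unfolding red_fun
      by (intro Hty_Htm.intros u1 u2 sh1 sh2t y'(3); simp)
    ultimately show ?thesis by blast
  qed
next
  case (red_forall v T1 T2 l)
  from h[unfolded red_forall] show ?thesis
  proof (rule HtmE_App2)
    show "a = shift_tm 0 0 e1 \<Longrightarrow> App (Cast (TAll T1) (TAll T2) l) v = shift_tm 0 0 e2 \<Longrightarrow> ?thesis"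
      using hole_bwd rstep.r_red[OF rd] red_forall by metis
  next
    fix x y assume a: "a = App x y" "Htm e1 e2 0 x (Cast (TAll T1) (TAll T2) l)" "Htm e1 e2 0 y v"
    obtain x' where x': "(rstep L)\<^sup>*\<^sup>* x x'" "is_val x'" "Htm e1 e2 0 x' (Cast (TAll T1) (TAll T2) l)" using val_bwd a(2) by force
    obtain S1 S2 where x'': "x' = Cast S1 S2 l" "Hty e1 e2 0 S1 (TAll T1)" "Hty e1 e2 0 S2 (TAll T2)" using inv_Cast2[OF x'(3,2)] by metis
    obtain U1 where u1: "S1 = TAll U1" "Hty e1 e2 (Suc 0) U1 T1"
      using x''(2) by (auto elim: HtyE_TAll2)
    obtain U2 where u2: "S2 = TAll U2" "Hty e1 e2 (Suc 0) U2 T2"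
      using x''(3) by (auto elim: HtyE_TAll2)
    obtain y' where y': "(rstep L)\<^sup>*\<^sup>* y y'" "is_val y'" "Htm e1 e2 0 y' v" using val_bwd a(3) red_forall by force
    have st: "rstep L (App x' y') (TLam (App (Cast U1 U2 l) (TApp (shift_tm 1 0 y') (TVar 0))))"
      using rstep.r_red[OF red.red_forall[OF y'(2), of L U1 U2 l]] x'' u1 u2 by simp
    have "(rstep L)\<^sup>*\<^sup>* a (TLam (App (Cast U1 U2 l) (TApp (shift_tm 1 0 y') (TVar 0))))"
      using app_bwd[OF x'(1,2) y'(1)] st a(1) by (metis rtranclp.rtrancl_into_rtrancl)
    moreover have "Htm e1 e2 0 (TLam (App (Cast U1 U2 l) (TApp (shift_tm 1 0 y') (TVar 0)))) b'"
      unfolding red_forall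
      by (intro Hty_Htm.intros u1 u2 sh1t y'(3); simp)
    ultimately show ?thesis by blast
  qed
next
  case (red_forget v T1 e T2 l)
  from h[unfolded red_forget] show ?thesis
  proof (rule HtmE_App2)
    show "a = shift_tm 0 0 e1 \<Longrightarrow> App (Cast (TRef T1 e) T2 l) v = shift_tm 0 0 e2 \<Longrightarrow> ?thesis"
      using hole_bwd rstep.r_red[OF rd] red_forget by metis
  next
    fix x y assume a: "a = App x y" "Htm e1 e2 0 x (Cast (TRef T1 e) T2 l)" "Htm e1 e2 0 y v"
    obtain x' where x': "(rstep L)\<^sup>*\<^sup>* x x'" "is_val x'" "Htm e1 e2 0 x' (Cast (TRef T1 e) T2 l)" using val_bwd a(2) by force
    obtain S1 S2 where x'': "x' = Cast S1 S2 l" "Hty e1 e2 0 S1 (TRef T1 e)" "Hty e1 e2 0 S2 T2" using inv_Cast2[OF x'(3,2)] by metis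
    obtain U1 f where u1: "S1 = TRef U1 f" "Hty e1 e2 0 U1 T1"
      using x''(2) by (auto elim: HtyE_TRef2)
    obtain y' where y': "(rstep L)\<^sup>*\<^sup>* y y'" "is_val y'" "Htm e1 e2 0 y' v" using val_bwd a(3) red_forget by force
    have st: "rstep L (App x' y') (App (Cast U1 S2 l) y')"
      using rstep.r_red[OF red.red_forget[OF y'(2), of L U1 f S2 l]] x'' u1 by simp
    have "(rstep L)\<^sup>*\<^sup>* a (App (Cast U1 S2 l) y')"
      using app_bwd[OF x'(1,2) y'(1)] st a(1) by (metis rtranclp.rtrancl_into_rtrancl)
    moreover have "Htm e1 e2 0 (App (Cast U1 S2 l) y') b'"
      unfolding red_forget
      by (intro Hty_Htm.intros u1 x'' y'(3))
    ultimately show ?thesis by blast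
  qed
next
  case (red_precheck v T1 T2 e l)
  from h[unfolded red_precheck] show ?thesis
  proof (rule HtmE_App2)
    show "a = shift_tm 0 0 e1 \<Longrightarrow> App (Cast T1 (TRef T2 e) l) v = shift_tm 0 0 e2 \<Longrightarrow> ?thesis"
      using hole_bwd rstep.r_red[OF rd] red_precheck by metis
  next
    fix x y assume a: "a = App x y" "Htm e1 e2 0 x (Cast T1 (TRef T2 e) l)" "Htm e1 e2 0 y v"
    obtain x' where x': "(rstep L)\<^sup>*\<^sup>* x x'" "is_val x'" "Htm e1 e2 0 x' (Cast T1 (TRef T2 e) l)" using val_bwd a(2) by force
    obtain S1 S2 where x'': "x' = Cast S1 S2 l" "Hty e1 e2 0 S1 T1" "Hty e1 e2 0 S2 (TRef T2 e)" using inv_Cast2[OF x'(3,2)] by metis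
    obtain U2 f where u2: "S2 = TRef U2 f" "Hty e1 e2 0 U2 T2" "Htm e1 e2 (Suc 0) f e"
      using x''(3) by (auto elim: HtyE_TRef2)
    have nr: "\<not> is_ref S1" using Hty_isref[OF x''(2)] red_precheck by simp
    obtain y' where y': "(rstep L)\<^sup>*\<^sup>* y y'" "is_val y'" "Htm e1 e2 0 y' v" using val_bwd a(3) red_precheck by force
    have st: "rstep L (App x' y') (Check U2 f (App (Cast S1 U2 l) y') l)"
      using rstep.r_red[OF red.red_precheck[OF y'(2) nr, of L U2 f l]] x'' u2 by simp
    have "(rstep L)\<^sup>*\<^sup>* a (Check U2 f (App (Cast S1 U2 l) y') l)"
      using app_bwd[OF x'(1,2) y'(1)] st a(1) by (metis rtranclp.rtrancl_into_rtrancl)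
    moreover have "Htm e1 e2 0 (Check U2 f (App (Cast S1 U2 l) y') l) b'"
      unfolding red_precheck
      by (intro Hty_Htm.intros u2 x'' y'(3))
    ultimately show ?thesis by blast
  qed
next
  case (red_check v T e l)
  from h[unfolded red_check] show ?thesis
  proof (rule HtmE_Check2)
    show "a = shift_tm 0 0 e1 \<Longrightarrow> Check T e v l = shift_tm 0 0 e2 \<Longrightarrow> ?thesis"
      using hole_bwd rstep.r_red[OF rd] red_check by metis
  next
    fix T' e' y assume a: "a = Check T' e' y l" "Hty e1 e2 0 T' T" "Htm e1 e2 (Suc 0) e' e" "Htm e1 e2 0 y v"
    obtain y' where y': "(rstep L)\<^sup>*\<^sup>* y y'" "is_val y'" "Htm e1 e2 0 y' v" using val_bwd a(4) red_check by force
    have "(rstep L)\<^sup>*\<^sup>* a (Active T' e' (subst_tm 0 y' e') y' l)"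
      using check_bwd[OF y'(1)] y'(2) a(1) by (metis rstep.r_red red.red_check rtranclp.rtrancl_into_rtrancl)
    moreover have "Htm e1 e2 0 (Active T' e' (subst_tm 0 y' e') y' l) b'"
      unfolding red_check
      by (intro Hty_Htm.intros a y'(3) H_subst(2)[OF a(3) refl y'(3)])
    ultimately show ?thesis by blast
  qed
next
  case (red_ok T e l)
  from h[unfolded red_ok] show ?thesis
  proof (rule HtmE_Active2)
    show "a = shift_tm 0 0 e1 \<Longrightarrow> Active T e (Const (tt L)) b' l = shift_tm 0 0 e2 \<Longrightarrow> ?thesis"
      using hole_bwd rstep.r_red[OF rd] red_ok by metis
  next
    fix T' e' c y assume a: "a = Active T' e' c y l" "Hty e1 e2 0 T' T" "Htm e1 e2 (Suc 0) e' e"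
      "Htm e1 e2 0 c (Const (tt L))" "Htm e1 e2 0 y b'"
    obtain y' where y': "(rstep L)\<^sup>*\<^sup>* y y'" "is_val y'" "Htm e1 e2 0 y' b'" using val_bwd a(5) red_ok by force
    obtain c' where c': "(rstep L)\<^sup>*\<^sup>* c c'" "is_val c'" "Htm e1 e2 0 c' (Const (tt L))" using val_bwd a(4) by force
    have "c' = Const (tt L)" using inv_Const2 c' by metis
    then have "(rstep L)\<^sup>*\<^sup>* a y'"
      using act_bwd[OF y'(1,2) c'(1)] y'(2) a(1) by (metis rstep.r_red red.red_ok rtranclp.rtrancl_into_rtrancl)
    then show ?thesis using y'(3) by blast
  qed
next
  case (red_fail v T e l)
  from h[unfolded red_fail] show ?thesis
  proof (rule HtmE_Active2)
    show "a = shift_tm 0 0 e1 \<Longrightarrow> Active T e (Const (ff L)) v l = shift_tm 0 0 e2 \<Longrightarrow> ?thesis"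
      using hole_bwd rstep.r_red[OF rd] red_fail by metis
  next
    fix T' e' c y assume a: "a = Active T' e' c y l" "Hty e1 e2 0 T' T" "Htm e1 e2 (Suc 0) e' e"
      "Htm e1 e2 0 c (Const (ff L))" "Htm e1 e2 0 y v"
    obtain y' where y': "(rstep L)\<^sup>*\<^sup>* y y'" "is_val y'" "Htm e1 e2 0 y' v" using val_bwd a(5) red_fail by force
    obtain c' where c': "(rstep L)\<^sup>*\<^sup>* c c'" "is_val c'" "Htm e1 e2 0 c' (Const (ff L))" using val_bwd a(4) by force
    have "c' = Const (ff L)" using inv_Const2 c' by metis
    then have "(rstep L)\<^sup>*\<^sup>* a (Blame l)"
      using act_bwd[OF y'(1,2) c'(1)] y'(2) a(1) by (metis rstep.r_red red.red_fail rtranclp.rtrancl_into_rtrancl)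
    then show ?thesis using red_fail Hty_Htm.HBlame by metis
  qed
qed

end

lemma rstep_lstep: "rstep L a b \<Longrightarrow> lstep L a b"
  unfolding lstep_def by simp

lemma rsteps_lsteps: "(rstep L)\<^sup>*\<^sup>* a b \<Longrightarrow> (lstep L)\<^sup>*\<^sup>* a b"
  by (induct rule: rtranclp_induct) (auto intro: rtranclp.rtrancl_into_rtrancl rstep_lstep)

lemma blame_no_lstep: "\<not> lstep L (Blame l) x"
  unfolding lstep_def using blame_no_rstep by (auto elim: blm.cases)

lemma lsteps_blame: "(lstep L)\<^sup>*\<^sup>* (Blame l) x \<Longrightarrow> x = Blame l"
  by (induct rule: rtranclp_induct) (auto simp: blame_no_lstep)

lemma lstep_cases: "lstep L a b \<Longrightarrow> (rstep L a b \<Longrightarrow> P) \<Longrightarrow> (\<And>l. b = Blame l \<Longrightarrow> P) \<Longrightarrow> P"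
  unfolding lstep_def by auto

context cotl
begin

lemma sim_bwd: "rstep L b b' \<Longrightarrow> Htm e1 e2 0 a b \<Longrightarrow> \<exists>a'. (rstep L)\<^sup>*\<^sup>* a a' \<and> Htm e1 e2 0 a' b'"
proof (induct arbitrary: a rule: rstep.induct)
  case (r_red b b')
  then show ?case using red_bwd by metis
next
  case (r_appL x x' y)
  from r_appL(3) show ?case
  proof (rule HtmE_App2)
    show "a = shift_tm 0 0 e1 \<Longrightarrow> App x y = shift_tm 0 0 e2 \<Longrightarrow> ?thesis"
      using hole_bwd rstep.r_appL[OF r_appL(1)] by metis
  next
    fix ax ay assume a: "a = App ax ay" "Htm e1 e2 0 ax x" "Htm e1 e2 0 ay y"
    obtain ax' where "(rstep L)\<^sup>*\<^sup>* ax ax'" "Htm e1 e2 0 ax' x'" using r_appL(2) a by metis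
    then show ?thesis using a rtranclp_lift[of "\<lambda>z. App z ay"] by (metis rstep.r_appL Hty_Htm.HApp)
  qed
next
  case (r_appR v y y')
  from r_appR(4) show ?case
  proof (rule HtmE_App2)
    show "a = shift_tm 0 0 e1 \<Longrightarrow> App v y = shift_tm 0 0 e2 \<Longrightarrow> ?thesis"
      using hole_bwd rstep.r_appR[OF r_appR(1,2)] by metis
  next
    fix ax ay assume a: "a = App ax ay" "Htm e1 e2 0 ax v" "Htm e1 e2 0 ay y"
    obtain ax' where ax': "(rstep L)\<^sup>*\<^sup>* ax ax'" "is_val ax'" "Htm e1 e2 0 ax' v" using val_bwd a(2) r_appR(1) by force
    obtain ay' where ay': "(rstep L)\<^sup>*\<^sup>* ay ay'" "Htm e1 e2 0 ay' y'" using r_appR(3) a by metis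
    show ?thesis using app_bwd[OF ax'(1,2) ay'(1)] a ax' ay' by (metis Hty_Htm.HApp)
  qed
next
  case (r_tapp x x' T)
  from r_tapp(3) show ?case
  proof (rule HtmE_TApp2)
    show "a = shift_tm 0 0 e1 \<Longrightarrow> TApp x T = shift_tm 0 0 e2 \<Longrightarrow> ?thesis"
      using hole_bwd rstep.r_tapp[OF r_tapp(1)] by metis
  next
    fix ax T' assume a: "a = TApp ax T'" "Htm e1 e2 0 ax x" "Hty e1 e2 0 T' T"
    obtain ax' where "(rstep L)\<^sup>*\<^sup>* ax ax'" "Htm e1 e2 0 ax' x'" using r_tapp(2) a by metis
    then show ?thesis using a tapp_bwd by (metis Hty_Htm.HTApp)
  qed
next
  case (r_check x x' T e l)
  from r_check(3) show ?case
  proof (rule HtmE_Check2)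
    show "a = shift_tm 0 0 e1 \<Longrightarrow> Check T e x l = shift_tm 0 0 e2 \<Longrightarrow> ?thesis"
      using hole_bwd rstep.r_check[OF r_check(1)] by metis
  next
    fix T' e' ax assume a: "a = Check T' e' ax l" "Hty e1 e2 0 T' T" "Htm e1 e2 (Suc 0) e' e" "Htm e1 e2 0 ax x"
    obtain ax' where "(rstep L)\<^sup>*\<^sup>* ax ax'" "Htm e1 e2 0 ax' x'" using r_check(2) a by metis
    then show ?thesis using a check_bwd by (metis Hty_Htm.HCheck)
  qed
next
  case (r_act v x x' T e l)
  from r_act(4) show ?case
  proof (rule HtmE_Active2)
    show "a = shift_tm 0 0 e1 \<Longrightarrow> Active T e x v l = shift_tm 0 0 e2 \<Longrightarrow> ?thesis"
      using hole_bwd rstep.r_act[OF r_act(1,2)] by metis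
  next
    fix T' e' ax av assume a: "a = Active T' e' ax av l" "Hty e1 e2 0 T' T" "Htm e1 e2 (Suc 0) e' e"
      "Htm e1 e2 0 ax x" "Htm e1 e2 0 av v"
    obtain av' where av': "(rstep L)\<^sup>*\<^sup>* av av'" "is_val av'" "Htm e1 e2 0 av' v" using val_bwd a(5) r_act(1) by force
    obtain ax' where ax': "(rstep L)\<^sup>*\<^sup>* ax ax'" "Htm e1 e2 0 ax' x'" using r_act(3) a by metis
    show ?thesis using act_bwd[OF av'(1,2) ax'(1)] a av' ax' by (metis Hty_Htm.HActive)
  qed
next
  case (r_actv x x' T e c l)
  from r_actv(3) show ?case
  proof (rule HtmE_Active2)
    show "a = shift_tm 0 0 e1 \<Longrightarrow> Active T e c x l = shift_tm 0 0 e2 \<Longrightarrow> ?thesis"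
      using hole_bwd rstep.r_actv[OF r_actv(1)] by metis
  next
    fix T' e' ac ax assume a: "a = Active T' e' ac ax l" "Hty e1 e2 0 T' T" "Htm e1 e2 (Suc 0) e' e"
      "Htm e1 e2 0 ac c" "Htm e1 e2 0 ax x"
    obtain ax' where ax': "(rstep L)\<^sup>*\<^sup>* ax ax'" "Htm e1 e2 0 ax' x'" using r_actv(2) a by metis
    have "(rstep L)\<^sup>*\<^sup>* a (Active T' e' ac ax' l)"
      using rtranclp_lift[of "\<lambda>z. Active T' e' ac z l", OF _ ax'(1)] a(1) by (auto intro: rstep.r_actv)
    then show ?thesis using a ax' by (metis Hty_Htm.HActive)
  qed
next
  case (r_op vs x x' p es)
  from r_op(4) show ?case
  proof (rule HtmE_Op2)
    show "a = shift_tm 0 0 e1 \<Longrightarrow> Op p (vs @ x # es) = shift_tm 0 0 e2 \<Longrightarrow> ?thesis"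
      using hole_bwd rstep.r_op[OF r_op(1,2)] by metis
  next
    fix as assume a: "a = Op p as" "list_all2 (Htm e1 e2 0) as (vs @ x # es)"
    then obtain avs ax aes where as: "as = avs @ ax # aes" "list_all2 (Htm e1 e2 0) avs vs"
      "Htm e1 e2 0 ax x" "list_all2 (Htm e1 e2 0) aes es"
      by (auto simp: list_all2_append2 list_all2_Cons2)
    obtain avs' where avs': "(rstep L)\<^sup>*\<^sup>* (Op p ([] @ avs @ (ax # aes))) (Op p ([] @ avs' @ (ax # aes)))"
      "\<forall>v\<in>set avs'. is_val v" "list_all2 (Htm e1 e2 0) avs' vs"
      using ops_bwd[OF as(2) r_op(1), of "[]" p "ax # aes"] by auto
    obtain ax' where ax': "(rstep L)\<^sup>*\<^sup>* ax ax'" "Htm e1 e2 0 ax' x'" using r_op(3) as by metis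
    have "(rstep L)\<^sup>*\<^sup>* (Op p (avs' @ ax # aes)) (Op p (avs' @ ax' # aes))"
      using rtranclp_lift[of "\<lambda>z. Op p (avs' @ z # aes)", OF _ ax'(1)] avs'(2) by (auto intro: rstep.r_op)
    then have "(rstep L)\<^sup>*\<^sup>* a (Op p (avs' @ ax' # aes))" using avs'(1) a(1) as(1) by simp
    moreover have "Htm e1 e2 0 (Op p (avs' @ ax' # aes)) (Op p (vs @ x' # es))"
      using avs'(3) ax'(2) as(4) by (intro Hty_Htm.HOp list_all2_appendI list_all2_Cons[THEN iffD2] conjI)
    ultimately show ?thesis by blast
  qed
qed

lemma cot_fwd: "(lstep L)\<^sup>*\<^sup>* a t \<Longrightarrow> t = Const (tt L) \<Longrightarrow> Htm e1 e2 0 a b \<Longrightarrow> (lstep L)\<^sup>*\<^sup>* b t"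
proof (induct arbitrary: b rule: converse_rtranclp_induct)
  case base
  then show ?case using inv_Const by auto
next
  case (step a a1)
  from step(1) show ?case
  proof (rule lstep_cases)
    assume "rstep L a a1"
    then obtain b' where "(b' = b \<or> rstep L b b') \<and> Htm e1 e2 0 a1 b'" using sim_fwd step(5) by metis
    then show ?thesis using step(3,4) by (metis converse_rtranclp_into_rtranclp rstep_lstep)
  next
    fix l assume "a1 = Blame l"
    then show ?thesis using step(2,4) lsteps_blame by fastforce
  qed
qed

lemma cot_bwd: "(lstep L)\<^sup>*\<^sup>* b t \<Longrightarrow> t = Const (tt L) \<Longrightarrow> Htm e1 e2 0 a b \<Longrightarrow> (lstep L)\<^sup>*\<^sup>* a t"
proof (induct arbitrary: a rule: converse_rtranclp_induct)
  case base
  then show ?case using val_bwd[of a t] rsteps_lsteps inv_Const2 by fastforce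
next
  case (step b b1)
  from step(1) show ?case
  proof (rule lstep_cases)
    assume "rstep L b b1"
    then obtain a' where "(rstep L)\<^sup>*\<^sup>* a a'" "Htm e1 e2 0 a' b1" using sim_bwd step(5) by metis
    then show ?thesis using step(3,4) by (metis rtranclp_trans rsteps_lsteps)
  next
    fix l assume "b1 = Blame l"
    then show ?thesis using step(2,4) lsteps_blame by fastforce
  qed
qed

end

lemma typing_good:
  shows "wfctx L G \<Longrightarrow> (\<forall>T. EVar T \<in> set G \<longrightarrow> good_ty T)"
    and "wfty L G T \<Longrightarrow> good_ty T \<and> (\<forall>T. EVar T \<in> set G \<longrightarrow> good_ty T)"
    and "typing L G e T \<Longrightarrow> good_tm e \<and> (\<forall>T. EVar T \<in> set G \<longrightarrow> good_ty T)"
proof (induct rule: wfctx_wfty_typing.inducts)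
  case (t_op G p Ts T0 es)
  then show ?case by (auto simp: list_all_length)
qed auto

lemma refines_subst:
  "w \<in> refines (subst_ty k e T) \<longleftrightarrow> (\<exists>S r. Lam S r \<in> refines T \<and> w = Lam (subst_ty k e S) (subst_tm (Suc k) e r))"
  by (induct T rule: refines.induct) auto

lemma refines_good: "w \<in> refines T \<Longrightarrow> good_ty T \<Longrightarrow> good_tm w"
  by (induct T rule: refines.induct) auto

definition LT :: "('b,'k,'o,'x) fh_sig_scheme \<Rightarrow> ('b,'k,'o) tm \<Rightarrow> ('b,'k,'o) ty \<Rightarrow> bool" where
  "LT L v T \<longleftrightarrow> (\<forall>w\<in>refines T. (lstep L)\<^sup>*\<^sup>* (App w v) (Const (tt L)))"

lemma conv_pres: assumes tf: "tt L \<noteq> ff L" and c: "conv1 L T1 T2"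
  shows "LT L v T1 \<longleftrightarrow> LT L v T2"
proof -
  obtain T e1 e2 where c': "T1 = subst_ty 0 e1 T" "T2 = subst_ty 0 e2 T" "step L e1 e2"
    using c unfolding conv1_def by blast
  interpret cotl L e1 e2 using tf c'(3) by unfold_locales
  have rel: "Htm e1 e2 0 (App (Lam (subst_ty 0 e1 S) (subst_tm (Suc 0) e1 r)) v)
                         (App (Lam (subst_ty 0 e2 S) (subst_tm (Suc 0) e2 r)) v)" for S r
    by (intro Hty_Htm.intros H_subst_gen H_refl)
  show ?thesis
  proof
    assume l: "LT L v T1"
    show "LT L v T2" unfolding LT_def
    proof
      fix w assume "w \<in> refines T2"
      then obtain S r where Sr: "Lam S r \<in> refines T" "w = Lam (subst_ty 0 e2 S) (subst_tm (Suc 0) e2 r)"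
        using c'(2) refines_subst by metis
      have "Lam (subst_ty 0 e1 S) (subst_tm (Suc 0) e1 r) \<in> refines T1" using Sr c'(1) refines_subst by metis
      then have "(lstep L)\<^sup>*\<^sup>* (App (Lam (subst_ty 0 e1 S) (subst_tm (Suc 0) e1 r)) v) (Const (tt L))"
        using l unfolding LT_def by blast
      then show "(lstep L)\<^sup>*\<^sup>* (App w v) (Const (tt L))" using cot_fwd rel Sr(2) by metis
    qed
  next
    assume l: "LT L v T2"
    show "LT L v T1" unfolding LT_def
    proof
      fix w assume "w \<in> refines T1"
      then obtain S r where Sr: "Lam S r \<in> refines T" "w = Lam (subst_ty 0 e1 S) (subst_tm (Suc 0) e1 r)"
        using c'(1) refines_subst by metis
      have "Lam (subst_ty 0 e2 S) (subst_tm (Suc 0) e2 r) \<in> refines T2" using Sr c'(2) refines_subst by metis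
      then have "(lstep L)\<^sup>*\<^sup>* (App (Lam (subst_ty 0 e2 S) (subst_tm (Suc 0) e2 r)) v) (Const (tt L))"
        using l unfolding LT_def by blast
      then show "(lstep L)\<^sup>*\<^sup>* (App w v) (Const (tt L))" using cot_bwd rel Sr(2) by metis
    qed
  qed
qed

lemma tyequiv_pres: assumes tf: "tt L \<noteq> ff L" shows "tyequiv L T1 T2 \<Longrightarrow> LT L v T1 \<Longrightarrow> LT L v T2"
  unfolding tyequiv_def
proof (induct rule: tranclp_induct)
  case (base y) then show ?case using conv_pres[OF tf] by metis
next
  case (step y z) then show ?case using conv_pres[OF tf] by metis
qed

lemma val_no_lstep: "is_val a \<Longrightarrow> \<not> lstep L a b"
  unfolding lstep_def using rstep_nval blm_nval by metis

lemma lsteps_val: "(lstep L)\<^sup>*\<^sup>* a b \<Longrightarrow> is_val a \<Longrightarrow> b = a"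
  by (induct rule: converse_rtranclp_induct) (auto simp: val_no_lstep)

lemma check_inv: "(lstep L)\<^sup>*\<^sup>* x t \<Longrightarrow> x = Check T e a l \<Longrightarrow> t = Const k \<Longrightarrow>
  \<exists>v. (lstep L)\<^sup>*\<^sup>* a v \<and> is_val v \<and> (lstep L)\<^sup>*\<^sup>* (Active T e (subst_tm 0 v e) v l) (Const k)"
proof (induct arbitrary: a rule: converse_rtranclp_induct)
  case base then show ?case by simp
next
  case (step x y)
  from step(1) show ?case
  proof (rule lstep_cases)
    assume "rstep L x y"
    then show ?thesis unfolding step(4)
    proof cases
      case r_red
      then show ?thesis
      proof cases
        case (red_check)
        then show ?thesis using step(2,5) by auto
      qed
    next
      case (r_check a')
      then obtain v where "(lstep L)\<^sup>*\<^sup>* a' v" "is_val v" "(lstep L)\<^sup>*\<^sup>* (Active T e (subst_tm 0 v e) v l) (Const k)"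
        using step(3,5) by metis
      then show ?thesis using r_check by (metis converse_rtranclp_into_rtranclp rstep_lstep)
    qed
  next
    fix l' assume "y = Blame l'"
    then show ?thesis using step(2,5) lsteps_blame by fastforce
  qed
qed

lemma active_inv: "(lstep L)\<^sup>*\<^sup>* x t \<Longrightarrow> x = Active T e c v l \<Longrightarrow> t = Const k \<Longrightarrow> is_val v \<Longrightarrow>
  (lstep L)\<^sup>*\<^sup>* c (Const (tt L)) \<and> v = Const k"
proof (induct arbitrary: c rule: converse_rtranclp_induct)
  case base then show ?case by simp
next
  case (step x y)
  from step(1) show ?case
  proof (rule lstep_cases)
    assume "rstep L x y"
    then show ?thesis unfolding step(4)
    proof cases
      case r_red
      then show ?thesis
      proof cases
        case red_ok
        then show ?thesis using step(2,5,6) lsteps_val by fastforce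
      next
        case red_fail
        then show ?thesis using step(2,5) lsteps_blame by fastforce
      qed
    next
      case (r_act c')
      then show ?thesis using step(3,5,6) by (metis converse_rtranclp_into_rtranclp rstep_lstep)
    next
      case (r_actv v')
      then show ?thesis using step(6) rstep_nval by metis
    qed
  next
    fix l' assume "y = Blame l'"
    then show ?thesis using step(2,5) lsteps_blame by fastforce
  qed
qed

lemma const_ref: assumes tf: "tt L \<noteq> ff L"
  shows "unref T = TBase B \<Longrightarrow> (lstep L)\<^sup>*\<^sup>* (App (Cast (TBase B) T l) (Const k)) (Const k) \<Longrightarrow>
    \<forall>w\<in>refines T. (lstep L)\<^sup>*\<^sup>* (App w (Const k)) (Const (tt L))"
proof (induct T rule: refines.induct)
  case (1 T e)
  let ?a0 = "App (Cast (TBase B) (TRef T e) l) (Const k)"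
  let ?a1 = "Check T e (App (Cast (TBase B) T l) (Const k)) l"
  have s: "lstep L ?a0 ?a1" by (rule rstep_lstep, rule r_red, rule red_precheck) auto
  from 1(3) obtain y where y: "lstep L ?a0 y" "(lstep L)\<^sup>*\<^sup>* y (Const k)"
    by (cases rule: converse_rtranclpE) auto
  have "y = ?a1" using lstep_det[OF tf y(1) s] .
  then have y2: "(lstep L)\<^sup>*\<^sup>* ?a1 (Const k)" using y(2) by simp
  then obtain v where v: "(lstep L)\<^sup>*\<^sup>* (App (Cast (TBase B) T l) (Const k)) v" "is_val v"
    "(lstep L)\<^sup>*\<^sup>* (Active T e (subst_tm 0 v e) v l) (Const k)"
    using check_inv[OF y2 refl refl] by metis
  have c: "(lstep L)\<^sup>*\<^sup>* (subst_tm 0 v e) (Const (tt L))" "v = Const k"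
    using active_inv[OF v(3) refl refl v(2)] by auto
  have "(lstep L)\<^sup>*\<^sup>* (App (Lam T e) (Const k)) (Const (tt L))"
    using c by (metis converse_rtranclp_into_rtranclp rstep_lstep r_red red_beta is_val.simps(1))
  moreover have "\<forall>w\<in>refines T. (lstep L)\<^sup>*\<^sup>* (App w (Const k)) (Const (tt L))"
    using 1(1) 1(2) v(1) c(2) by simp
  ultimately show ?case by simp
qed auto

lemma lsteps_to_steps: "w \<in> refines T \<Longrightarrow> good_ty T \<Longrightarrow> good_tm v \<Longrightarrow>
  (lstep L)\<^sup>*\<^sup>* (App w v) t \<Longrightarrow> steps L (App w v) t"
  using lsteps_steps refines_good by fastforce

lemma main_aux:
  shows "wfctx L G \<Longrightarrow> True"
    and "wfty L G T \<Longrightarrow> True"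
    and "typing L G e T \<Longrightarrow> fh_sig_ok L \<Longrightarrow> G = [] \<Longrightarrow> is_val e \<Longrightarrow>
         \<forall>w\<in>refines T. steps L (App w e) (Const (tt L))"
proof (induct rule: wfctx_wfty_typing.inducts)
  case (t_const G k)
  have ok: "fh_sig_ok L" by fact
  then have tf: "tt L \<noteq> ff L" and u: "unref (cty L k) = TBase (cbase L k)" and wf: "wfty L [] (cty L k)"
    and st: "steps L (App (Cast (TBase (cbase L k)) (cty L k) 0) (Const k)) (Const k)"
    unfolding fh_sig_ok_def by blast+
  have g: "good_ty (cty L k)" using typing_good(2)[OF wf] by simp
  have "\<forall>w\<in>refines (cty L k). (lstep L)\<^sup>*\<^sup>* (App w (Const k)) (Const (tt L))"
    using const_ref[OF tf u steps_lsteps[OF st]] .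
  then show ?case
  proof (intro ballI)
    fix w assume "\<forall>w\<in>refines (cty L k). (lstep L)\<^sup>*\<^sup>* (App w (Const k)) (Const (tt L))" "w \<in> refines (cty L k)"
    then show "steps L (App w (Const k)) (Const (tt L))" using lsteps_to_steps[of w "cty L k" "Const k" L] g by simp
  qed
next
  case (t_conv G e T1 T2)
  have tf: "tt L \<noteq> ff L" using t_conv.prems(1) unfolding fh_sig_ok_def by blast
  have "\<forall>w\<in>refines T1. steps L (App w e) (Const (tt L))" using t_conv by simp
  then have "LT L e T1" unfolding LT_def using steps_lsteps by blast
  then have "LT L e T2" using tyequiv_pres[OF tf \<open>tyequiv L T1 T2\<close>] by blast
  moreover have "good_ty T2" using typing_good(2)[OF \<open>wfty L [] T2\<close>] by simp
  moreover have "good_tm e" using typing_good(3)[OF \<open>typing L [] e T1\<close>] by simp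
  ultimately show ?case unfolding LT_def using lsteps_to_steps by blast
next
  case (t_forget G v T e)
  then show ?case by simp
next
  case (t_exact G v T e)
  have "steps L (App (Lam T e) v) (subst_tm 0 v e)"
    using step.step_red[of "[]" L "App (Lam T e) v" "subst_tm 0 v e"] red_beta[OF \<open>is_val v\<close>] by auto
  then have "steps L (App (Lam T e) v) (Const (tt L))" using \<open>steps L (subst_tm 0 v e) (Const (tt L))\<close> by simp
  then show ?case using t_exact by simp
qed auto

theorem mainTheorem6:
  fixes L :: "('b, 'k, 'o) fh_sig"
  assumes "fh_sig_ok L"
    and "is_val v"
    and "typing L [] v T"
  shows "\<forall>w \<in> refines T. steps L (App w v) (Const (tt L))"
  using main_aux(3)[OF assms(3) assms(1) refl assms(2)] .

end
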